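(* Let $\varphi:\mathbb{N}\to\mathbb{C}$ satisfy $|\varphi(m)|\leq 1$ for all $m$. For all real $\alpha\geq 1$, $\beta\geq 0$, $K\geq 0$ and $H\geq 1$, \[ \left|\sum_{0<n\leq K}\varphi\bigl(\lfloor n\alpha+\beta\rfloor\bigr)-\frac 1\alpha\sum_{\beta<m\leq \beta+K\alpha}\varphi(m)\right| \leq \sum_{1\leq |h|\leq H}\min\left\{\frac 1\alpha,\frac 1{|h|}\right\}\left|\sum_{\beta<m\leq\beta+K\alpha}\varphi(m)\,e\!\left(-m\frac h\alpha\right)\right| +\frac 1H\sum_{0\leq|h|\leq H}\left|\sum_{\beta<m\leq\beta+K\alpha}e\!\left(-m\frac h\alpha\right)\right|+O(1), \] where the implied constant is absolute.
   Context: $e(x)=e^{2\pi i x}$; $\lfloor\cdot\rfloor$ is the floor function; $\mathbb{N}$ denotes the nonnegative integers; sums over $n,m,h$ range over integers in the indicated ranges. *)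

theory Defs
  imports Complex_Main
begin

definition e :: "real \<Rightarrow> complex" where
  "e x = exp (2 * of_real pi * \<i> * of_real x)"

end

theory Submission
  imports Defs "HOL-Analysis.Analysis" "HOL-Real_Asymp.Real_Asymp"
begin

lemma rGamma_refl_real: "rGamma (x::real) * rGamma (1 - x) = sin (pi * x) / pi"
proof -
  have "complex_of_real (rGamma x * rGamma (1 - x)) = rGamma (of_real x) * rGamma (1 - of_real x)"
    by (simp add: rGamma_complex_of_real[symmetric])
  also have "\<dots> = sin (of_real pi * of_real x) / of_real pi" by (rule rGamma_reflection_complex)
  also have "\<dots> = complex_of_real (sin (pi * x) / pi)" by (simp add: sin_of_real[symmetric])
  finally show ?thesis by (simp only: of_real_eq_iff)
qed

lemma not_Ints_nonpos: "(x::real) \<notin> \<int> \<Longrightarrow> x \<notin> \<int>\<^sub>\<le>\<^sub>0"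
  using nonpos_Ints_subset_Ints by blast

lemma not_Ints_1m: "(x::real) \<notin> \<int> \<Longrightarrow> 1 - x \<notin> \<int>"
proof
  assume "x \<notin> \<int>" "1 - x \<in> \<int>"
  then have "1 - (1 - x) \<in> \<int>" by (intro Ints_diff) auto
  then show False using \<open>x \<notin> \<int>\<close> by simp
qed

lemma sin_pi_nz: assumes "(x::real) \<notin> \<int>" shows "sin (pi * x) \<noteq> 0"
proof
  assume "sin (pi * x) = 0"
  then obtain i :: int where "pi * x = of_int i * pi" by (auto simp: sin_zero_iff_int2)
  then have "x = of_int i" by simp
  with assms show False by simp
qed

lemma digamma_refl:
  assumes x: "(x::real) \<notin> \<int>"
  shows "Digamma (1 - x) - Digamma x = pi * cot (pi * x)"
proof -
  have x1: "x \<notin> \<int>\<^sub>\<le>\<^sub>0" "1 - x \<notin> \<int>\<^sub>\<le>\<^sub>0" using x not_Ints_nonpos not_Ints_1m by auto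
  have d1: "((\<lambda>x. rGamma x * rGamma (1 - x)) has_field_derivative
      (- rGamma x * Digamma x) * rGamma (1 - x) + rGamma x * ((- rGamma (1-x) * Digamma (1-x)) * (-1))) (at x)"
    using x1
    by (auto intro!: derivative_eq_intros has_field_derivative_rGamma_no_nonpos_int
           DERIV_chain2[OF has_field_derivative_rGamma_no_nonpos_int])
  have d2: "((\<lambda>x. sin (pi * x) / pi) has_field_derivative cos (pi * x)) (at x)"
    by (auto intro!: derivative_eq_intros)
  have eq: "(\<lambda>x. rGamma x * rGamma (1 - x)) = (\<lambda>x. sin (pi * x) / pi)"
    using rGamma_refl_real by auto
  have "(- rGamma x * Digamma x) * rGamma (1 - x) + rGamma x * ((- rGamma (1-x) * Digamma (1-x)) * (-1))
      = cos (pi * x)" using DERIV_unique[OF d1 d2[folded eq]] by simp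
  then have "(rGamma x * rGamma (1 - x)) * (Digamma (1 - x) - Digamma x) = cos (pi * x)"
    by (simp add: algebra_simps)
  then have "sin (pi * x) / pi * (Digamma (1 - x) - Digamma x) = cos (pi * x)"
    by (simp add: rGamma_refl_real)
  then show ?thesis using sin_pi_nz[OF x] by (simp add: cot_def field_simps)
qed

lemma floor_interval_not_Ints:
  assumes "of_int k < (t::real)" "t < of_int k + 1" shows "t \<notin> \<int>"
proof
  assume "t \<in> \<int>" then obtain j where j: "t = of_int j" by (auto elim: Ints_cases)
  with assms have "k < j" "j < k + 1" by simp_all
  then show False by simp
qed

lemma polygamma_refl:
  assumes x: "(x::real) \<notin> \<int>"
  shows "Polygamma 1 x + Polygamma 1 (1 - x) = (pi / sin (pi * x))^2"
proof -
  define S where "S = {of_int \<lfloor>x\<rfloor> <..< of_int \<lfloor>x\<rfloor> + (1::real)}"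
  have xf: "of_int \<lfloor>x\<rfloor> \<noteq> x" using x Ints_of_int by force
  have "of_int \<lfloor>x\<rfloor> < x" using xf of_int_floor_le[of x] by linarith
  then have S: "open S" "x \<in> S" unfolding S_def by auto
  have SZ: "t \<notin> \<int>" if "t \<in> S" for t
  proof -
    from that have "of_int \<lfloor>x\<rfloor> < t" "t < of_int \<lfloor>x\<rfloor> + 1" unfolding S_def by auto
    then show ?thesis by (rule floor_interval_not_Ints)
  qed
  have x1: "x \<notin> \<int>\<^sub>\<le>\<^sub>0" "1 - x \<notin> \<int>\<^sub>\<le>\<^sub>0" using x not_Ints_nonpos not_Ints_1m by auto
  have d1: "((\<lambda>x. Digamma (1 - x) - Digamma x) has_field_derivative
      Polygamma 1 (1 - x) * (-1) - Polygamma 1 x) (at x)"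
    using x1
    by (auto intro!: derivative_eq_intros has_field_derivative_Polygamma
           DERIV_chain2[OF has_field_derivative_Polygamma])
  have sn: "sin (pi * x) \<noteq> 0" using sin_pi_nz[OF x] .
  have d2: "((\<lambda>x. pi * (cos (pi * x) / sin (pi * x))) has_field_derivative
       pi * (((- sin (pi * x) * pi) * sin (pi * x) - cos (pi * x) * (cos (pi * x) * pi)) / (sin (pi * x) * sin (pi * x)))) (at x)"
    using sn by (intro DERIV_cmult DERIV_divide) (auto intro!: derivative_eq_intros)
  have d2': "((\<lambda>x. Digamma (1 - x) - Digamma x) has_field_derivative
       pi * (((- sin (pi * x) * pi) * sin (pi * x) - cos (pi * x) * (cos (pi * x) * pi)) / (sin (pi * x) * sin (pi * x)))) (at x)"
  proof (rule has_field_derivative_transform_within_open[OF d2 S])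
    fix t assume "t \<in> S"
    from digamma_refl[OF SZ[OF this]] show "pi * (cos (pi * t) / sin (pi * t)) = Digamma (1 - t) - Digamma t"
      by (simp add: cot_def)
  qed
  have "Polygamma 1 (1 - x) * (-1) - Polygamma 1 x =
     pi * (((- sin (pi * x) * pi) * sin (pi * x) - cos (pi * x) * (cos (pi * x) * pi)) / (sin (pi * x) * sin (pi * x)))"
    using DERIV_unique[OF d1 d2'] .
  also have "\<dots> = - (pi * pi) / (sin (pi * x) * sin (pi * x))"
  proof -
    have sc: "sin (pi*x) * sin (pi*x) + cos (pi*x) * cos (pi*x) = 1"
      using sin_cos_squared_add[of "pi*x"] by (simp add: power2_eq_square)
    have "((- sin (pi * x) * pi) * sin (pi * x) - cos (pi * x) * (cos (pi * x) * pi))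
        = - pi * (sin (pi*x) * sin (pi*x) + cos (pi*x) * cos (pi*x))" by algebra
    also have "\<dots> = - pi" unfolding sc by simp
    finally show ?thesis by simp
  qed
  finally show ?thesis by (simp add: power2_eq_square)
qed

lemma Ico_int_ext: "(a::int) \<le> b \<Longrightarrow> {a - 1..<b + 1} = insert (a - 1) (insert b {a..<b})"
  by auto

lemma split_sym_sum:
  "(\<Sum>n\<in>{- int (Suc M)..<int (Suc M)}. f n) = (\<Sum>m<Suc (Suc M). f (- int m)) + (\<Sum>m<M. f (int m + 1))"
proof (induction M)
  case 0
  have "{- int (Suc 0)..<int (Suc 0)} = {-1, 0}" by auto
  then show ?case by (simp add: numeral_2_eq_2 add.commute)
next
  case (Suc M)
  have e: "{- int (Suc (Suc M))..<int (Suc (Suc M))} = insert (- int (Suc M) - 1) (insert (int (Suc M)) {- int (Suc M)..<int (Suc M)})"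
    using Ico_int_ext[of "- int (Suc M)" "int (Suc M)"] by (simp add: algebra_simps)
  show ?case unfolding e using Suc by (simp add: algebra_simps)
qed

lemma PF_sq:
  assumes z: "(z::real) \<notin> \<int>"
  shows "(\<lambda>M. \<Sum>n\<in>{- int M..<int M}. 1 / (z - of_int n)^2) \<longlonglongrightarrow> (pi / sin (pi * z))^2"
proof -
  have z0: "z \<noteq> 0" "1 - z \<noteq> 0" using z by auto
  have s1: "summable (\<lambda>k. inverse ((z + of_nat k)^2))" by (rule Polygamma_converges') (use z0 in auto)
  have s2: "summable (\<lambda>k. inverse (((1 - z) + of_nat k)^2))" by (rule Polygamma_converges') (use z0 in auto)
  have p1: "Polygamma 1 z = (\<Sum>k. inverse ((z + of_nat k)^2))" by (simp add: Polygamma_def power2_eq_square)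
  have p2: "Polygamma 1 (1 - z) = (\<Sum>k. inverse (((1 - z) + of_nat k)^2))" by (simp add: Polygamma_def power2_eq_square)
  have l1: "(\<lambda>M. \<Sum>m<Suc (Suc M). inverse ((z + of_nat m)^2)) \<longlonglongrightarrow> Polygamma 1 z"
    unfolding p1 using summable_LIMSEQ[OF s1] by (intro LIMSEQ_Suc)
  have l2: "(\<lambda>M. \<Sum>m<M. inverse (((1 - z) + of_nat m)^2)) \<longlonglongrightarrow> Polygamma 1 (1 - z)"
    unfolding p2 using summable_LIMSEQ[OF s2] .
  have "(\<lambda>M. \<Sum>n\<in>{- int (Suc M)..<int (Suc M)}. 1 / (z - of_int n)^2) \<longlonglongrightarrow> Polygamma 1 z + Polygamma 1 (1 - z)"
  proof -
    have "(\<lambda>M. \<Sum>n\<in>{- int (Suc M)..<int (Suc M)}. 1 / (z - of_int n)^2) =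
      (\<lambda>M. (\<Sum>m<Suc (Suc M). inverse ((z + of_nat m)^2)) + (\<Sum>m<M. inverse (((1 - z) + of_nat m)^2)))"
      unfolding split_sym_sum by (intro ext arg_cong2[where f="(+)"] sum.cong) (auto simp: inverse_eq_divide algebra_simps power2_commute)
    then show ?thesis using tendsto_add[OF l1 l2] by simp
  qed
  then show ?thesis unfolding polygamma_refl[OF z] by (rule LIMSEQ_imp_Suc)
qed

lemma PF_cot:
  assumes z: "(z::real) \<notin> \<int>"
  shows "(\<lambda>M. \<Sum>n\<in>{- int M..<int M}. 1 / (z - of_int n)) \<longlonglongrightarrow> pi * cot (pi * z)"
proof -
  have z0: "z \<noteq> 0" "1 - z \<noteq> 0" using z by auto
  have l1: "(\<lambda>m. ln (real m) - (\<Sum>n<m. inverse (z + of_nat n))) \<longlonglongrightarrow> Digamma z"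
    using Digamma_LIMSEQ[OF z0(1)] by simp
  have l2: "(\<lambda>m. ln (real m) - (\<Sum>n<m. inverse ((1 - z) + of_nat n))) \<longlonglongrightarrow> Digamma (1 - z)"
    using Digamma_LIMSEQ[OF z0(2)] by simp
  have l1': "(\<lambda>M. ln (real (Suc (Suc M))) - (\<Sum>n<Suc (Suc M). inverse (z + of_nat n))) \<longlonglongrightarrow> Digamma z"
    using l1 by (intro LIMSEQ_Suc)
  have l3: "(\<lambda>M. ln (real (Suc (Suc M))) - ln (real M)) \<longlonglongrightarrow> 0"
    by real_asymp
  have "(\<lambda>M. (ln (real (Suc (Suc M))) - ln (real M)) - (ln (real (Suc (Suc M))) - (\<Sum>n<Suc (Suc M). inverse (z + of_nat n)))
            + (ln (real M) - (\<Sum>n<M. inverse ((1 - z) + of_nat n)))) \<longlonglongrightarrow> 0 - Digamma z + Digamma (1 - z)"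
    by (intro tendsto_intros l1' l2 l3)
  moreover have "(\<lambda>M. (ln (real (Suc (Suc M))) - ln (real M)) - (ln (real (Suc (Suc M))) - (\<Sum>n<Suc (Suc M). inverse (z + of_nat n)))
            + (ln (real M) - (\<Sum>n<M. inverse ((1 - z) + of_nat n)))) =
     (\<lambda>M. \<Sum>n\<in>{- int (Suc M)..<int (Suc M)}. 1 / (z - of_int n))"
  proof
    fix M
    have h: "\<And>m. 1/(1 + real m - z) = - (1/(z - (1 + real m)))"
      by (metis divide_minus_right minus_diff_eq)
    have "(\<Sum>n\<in>{- int (Suc M)..<int (Suc M)}. 1 / (z - of_int n)) =
       (\<Sum>m<Suc (Suc M). inverse (z + of_nat m)) - (\<Sum>m<M. inverse ((1 - z) + of_nat m))"
      unfolding split_sym_sum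
      by (simp add: inverse_eq_divide algebra_simps) (simp add: h sum_negf)
    then show "(ln (real (Suc (Suc M))) - ln (real M)) - (ln (real (Suc (Suc M))) - (\<Sum>n<Suc (Suc M). inverse (z + of_nat n)))
            + (ln (real M) - (\<Sum>n<M. inverse ((1 - z) + of_nat n))) = (\<Sum>n\<in>{- int (Suc M)..<int (Suc M)}. 1 / (z - of_int n))"
      by simp
  qed
  ultimately have "(\<lambda>M. \<Sum>n\<in>{- int (Suc M)..<int (Suc M)}. 1 / (z - of_int n)) \<longlonglongrightarrow> Digamma (1 - z) - Digamma z"
    by simp
  then show ?thesis unfolding digamma_refl[OF z] by (rule LIMSEQ_imp_Suc)
qed

definition psi :: "real \<Rightarrow> real" where "psi t = t - of_int \<lfloor>t\<rfloor> - 1/2"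
definition fej :: "nat \<Rightarrow> real \<Rightarrow> real" where
  "fej N t = 1 + 2 * (\<Sum>h=1..N. (1 - real h / real (Suc N)) * cos (2*pi*real h*t))"
definition gam :: "nat \<Rightarrow> nat \<Rightarrow> real" where
  "gam N h = ((1 - real h / real (Suc N)) * cot (pi * real h / real (Suc N)) + 1/pi) / (2 * real (Suc N))"
definition vp :: "nat \<Rightarrow> real \<Rightarrow> real" where
  "vp N t = - 2 * (\<Sum>h=1..N. gam N h * sin (2*pi*real h*t))"

lemma ucos_le_sin: assumes "0 \<le> u" "u \<le> pi" shows "u * cos u \<le> sin u"
proof -
  have "(\<lambda>u. u * cos u - sin u) u \<le> (\<lambda>u. u * cos u - sin u) 0"
  proof (rule DERIV_nonpos_imp_nonincreasing[OF assms(1)])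
    fix x assume x0: "0 \<le> x" "x \<le> u"
    then have x: "0 \<le> x \<and> x \<le> u" by simp
    have "((\<lambda>u. u * cos u - sin u) has_real_derivative (- (x * sin x))) (at x)"
      by (auto intro!: derivative_eq_intros)
    moreover have "0 \<le> x * sin x" using x assms by (intro mult_nonneg_nonneg sin_ge_zero) auto
    ultimately show "\<exists>y. ((\<lambda>u. u * cos u - sin u) has_real_derivative y) (at x) \<and> y \<le> 0" by force
  qed
  then show ?thesis by simp
qed

lemma ucot_le_1: assumes "0 < u" "u < pi" shows "u * cot u \<le> 1"
proof -
  have s: "sin u > 0" using assms by (intro sin_gt_zero) auto
  have "u * cos u \<le> sin u" using assms by (intro ucos_le_sin) auto
  then show ?thesis using s by (simp add: cot_def field_simps)
qed

lemma gam_bounds: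
  assumes h: "1 \<le> h" "h \<le> N"
  shows "0 \<le> gam N h" "gam N h \<le> 1 / (2 * pi * real h)"
proof -
  define L where "L = real (Suc N)"
  define t where "t = real h / L"
  define u where "u = pi * t"
  have L0: "L > 0" unfolding L_def by simp
  have t0: "0 < t" "t < 1" using h unfolding t_def L_def by (auto simp: field_simps)
  have u0: "0 < u" "u < pi" using t0 unfolding u_def by auto
  define X where "X = u * cot u"
  have X1: "X \<le> 1" unfolding X_def using u0 by (rule ucot_le_1)
  define v where "v = pi - u"
  have v0: "0 < v" "v < pi" using u0 unfolding v_def by auto
  have "cot u = - cot v" unfolding v_def cot_def by (simp add: sin_diff cos_diff)
  then have Xv: "(1 - t) * X = - t * (v * cot v)" unfolding X_def v_def u_def by (simp add: algebra_simps)
  have "v * cot v \<le> 1" using v0 by (rule ucot_le_1)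
  then have "(1 - t) * X \<ge> - t" unfolding Xv using t0 by (simp add: mult_le_cancel_left1)
  then have lo: "0 \<le> (1 - t) * X + t" by simp
  have hi: "(1 - t) * X + t \<le> 1" using X1 t0 by (smt (verit) mult_left_le)
  have hp: "real h > 0" using h by simp
  have eq: "gam N h = ((1 - t) * X + t) / (2 * pi * real h)"
    unfolding gam_def X_def u_def t_def L_def[symmetric] using L0 hp
    by (simp add: field_simps)
  show "0 \<le> gam N h" unfolding eq using lo hp by simp
  show "gam N h \<le> 1 / (2 * pi * real h)" unfolding eq using hi hp by (simp add: divide_right_mono)
qed

lemma prod_to_sum_sc: "2 * sin a * cos b = sin (b + a) - sin (b - (a::real))"
  by (simp add: sin_add sin_diff)

lemma dirichlet:
  "sin a * (1 + 2 * (\<Sum>h=1..m. cos (2 * real h * a))) = sin ((2 * real m + 1) * a)"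
proof (induction m)
  case 0 then show ?case by simp
next
  case (Suc m)
  have "sin a * (1 + 2 * (\<Sum>h=1..Suc m. cos (2 * real h * a))) =
        sin a * (1 + 2 * (\<Sum>h=1..m. cos (2 * real h * a))) + 2 * sin a * cos (2 * real (Suc m) * a)"
    by (simp add: algebra_simps)
  also have "\<dots> = sin ((2 * real m + 1) * a) + (sin (2 * real (Suc m) * a + a) - sin (2 * real (Suc m) * a - a))"
    using Suc prod_to_sum_sc by simp
  also have "2 * real (Suc m) * a - a = (2 * real m + 1) * a" by (simp add: algebra_simps)
  also have "2 * real (Suc m) * a + a = (2 * real (Suc m) + 1) * a" by (simp add: algebra_simps)
  finally show ?case by simp
qed

lemma sin_sq_diff: "(sin (A::real))^2 - (sin B)^2 = sin (A + B) * sin (A - B)"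
proof -
  have "sin (A + B) * sin (A - B) = (sin A * cos B + cos A * sin B) * (sin A * cos B - cos A * sin B)"
    by (simp add: sin_add sin_diff)
  also have "\<dots> = (sin A * cos B)^2 - (cos A * sin B)^2"
    by algebra
  also have "\<dots> = (sin A)^2 * (1 - (sin B)^2) - (1 - (sin A)^2) * (sin B)^2"
    by (simp add: power_mult_distrib cos_squared_eq)
  finally show ?thesis by (simp add: algebra_simps)
qed

lemma fej_aux:
  "(sin a)^2 * (real (Suc n) + 2 * (\<Sum>h=1..n. (real (Suc n) - real h) * cos (2 * real h * a))) = (sin (real (Suc n) * a))^2"
proof (induction n)
  case 0 then show ?case by simp
next
  case (Suc n)
  have split: "(\<Sum>h=1..Suc n. (real (Suc (Suc n)) - real h) * cos (2 * real h * a)) =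
     (\<Sum>h=1..n. (real (Suc n) - real h) * cos (2 * real h * a)) + (\<Sum>h=1..Suc n. cos (2 * real h * a))"
  proof -
    have "(\<Sum>h=1..Suc n. (real (Suc (Suc n)) - real h) * cos (2 * real h * a)) =
       (\<Sum>h=1..Suc n. (real (Suc n) - real h) * cos (2 * real h * a)) + (\<Sum>h=1..Suc n. cos (2 * real h * a))"
      by (simp add: sum.distrib[symmetric] algebra_simps)
    also have "(\<Sum>h=1..Suc n. (real (Suc n) - real h) * cos (2 * real h * a)) = (\<Sum>h=1..n. (real (Suc n) - real h) * cos (2 * real h * a))"
      by simp
    finally show ?thesis .
  qed
  have "(sin a)^2 * (real (Suc (Suc n)) + 2 * (\<Sum>h=1..Suc n. (real (Suc (Suc n)) - real h) * cos (2 * real h * a)))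
     = (sin a)^2 * (real (Suc n) + 2 * (\<Sum>h=1..n. (real (Suc n) - real h) * cos (2 * real h * a)))
       + sin a * (sin a * (1 + 2 * (\<Sum>h=1..Suc n. cos (2 * real h * a))))"
    unfolding split by (simp add: algebra_simps power2_eq_square)
  also have "\<dots> = (sin (real (Suc n) * a))^2 + sin a * sin ((2 * real (Suc n) + 1) * a)"
    using Suc dirichlet[of a "Suc n"] by simp
  also have "\<dots> = (sin (real (Suc (Suc n)) * a))^2"
  proof -
    have "(sin (real (Suc (Suc n)) * a))^2 - (sin (real (Suc n) * a))^2
       = sin (real (Suc (Suc n)) * a + real (Suc n) * a) * sin (real (Suc (Suc n)) * a - real (Suc n) * a)"
      by (rule sin_sq_diff)
    also have "real (Suc (Suc n)) * a + real (Suc n) * a = (2 * real (Suc n) + 1) * a" by (simp add: algebra_simps)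
    also have "real (Suc (Suc n)) * a - real (Suc n) * a = a" by (simp add: algebra_simps)
    finally show ?thesis by (simp add: algebra_simps)
  qed
  finally show ?case .
qed

lemma fej_closed: "(sin (pi * t))^2 * fej N t = (sin (pi * real (Suc N) * t))^2 / real (Suc N)"
proof -
  define L where "L = real (Suc N)"
  have L0: "L > 0" unfolding L_def by simp
  have cc: "\<And>h. cos (2 * real h * (pi * t)) = cos (2*pi*real h*t)" by (simp add: mult_ac)
  have e1: "\<And>h. (L - real h) * cos (2*pi*real h*t) / L = (1 - real h / L) * cos (2*pi*real h*t)"
    using L0 by (simp add: field_simps)
  have "(L + 2 * (\<Sum>h=1..N. (L - real h) * cos (2 * real h * (pi * t)))) / L
      = 1 + 2 * (\<Sum>h=1..N. (L - real h) * cos (2*pi*real h*t) / L)"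
    unfolding cc using L0 by (simp add: add_divide_distrib sum_divide_distrib[symmetric])
  also have "\<dots> = fej N t" unfolding e1 unfolding fej_def L_def ..
  finally have "fej N t = (L + 2 * (\<Sum>h=1..N. (L - real h) * cos (2 * real h * (pi * t)))) / L"
    by simp

  then have "(sin (pi * t))^2 * fej N t = (sin (pi * t))^2 * (L + 2 * (\<Sum>h=1..N. (L - real h) * cos (2 * real h * (pi * t)))) / L"
    by simp
  also have "\<dots> = (sin (L * (pi * t)))^2 / L" unfolding L_def by (subst fej_aux) simp
  finally show ?thesis unfolding L_def by (simp add: algebra_simps)
qed

lemma sin_sum_closed: "sin a * (\<Sum>h=1..n. sin (2 * real h * a)) = sin (real n * a) * sin (real (Suc n) * a)"
proof (induction n)
  case 0 then show ?case by simp
next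
  case (Suc n)
  define b where "b = real (Suc n) * a"
  have "sin a * (\<Sum>h=1..Suc n. sin (2 * real h * a)) = sin (real n * a) * sin b + sin a * sin (2 * b)"
    using Suc by (simp add: algebra_simps b_def)
  also have "real n * a = b - a" by (simp add: b_def algebra_simps)
  also have "real (Suc (Suc n)) * a = b + a" by (simp add: b_def algebra_simps)
  moreover have "sin (b - a) * sin b + sin a * sin (2 * b) = sin b * sin (b + a)"
    unfolding sin_double sin_add sin_diff by (simp add: algebra_simps)
  ultimately show ?case by (simp add: b_def)
qed

lemma gsum_c: "((w::complex) - 1) * (\<Sum>k<n. w^k) = w^n - 1"
  by (induction n) (auto simp: algebra_simps)

lemma ksum_c: "((w::complex) - 1) * (\<Sum>k<n. of_nat k * w^k) = of_nat n * w^n - w * (\<Sum>k<n. w^k)"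
  by (induction n) (auto simp: algebra_simps)

lemma vk_sums:
  assumes h: "1 \<le> h" "h \<le> N"
  shows "(\<Sum>k=1..N. (real k / real (Suc N) - 1/2) * cos (real k * (2 * pi * real h / real (Suc N)))) = 0"
    and "(\<Sum>k=1..N. (real k / real (Suc N) - 1/2) * sin (real k * (2 * pi * real h / real (Suc N))))
           = - (1/2) * cot (pi * real h / real (Suc N))"
proof -
  define L where "L = real (Suc N)"
  define th where "th = 2 * pi * real h / L"
  define w where "w = cis th"
  have L0: "L > 0" unfolding L_def by simp
  have hl: "0 < real h / L" "real h / L < 1" using h unfolding L_def by (auto simp: field_simps)
  have the: "th = 2 * pi * (real h / L)" unfolding th_def by simp
  have th0: "0 < th" "th < 2 * pi"
  proof -
    have "2 * pi * (real h / L) < 2 * pi * 1" by (rule mult_strict_left_mono) (use hl in auto)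
    then show "th < 2 * pi" unfolding the by simp
    show "0 < th" unfolding the using hl by (intro mult_pos_pos) auto
  qed
  have wk: "w ^ k = cis (real k * th)" for k unfolding w_def by (rule Complex.DeMoivre)
  have wL: "w ^ Suc N = 1"
  proof -
    have "real (Suc N) * th = 2 * pi * real h" unfolding th_def L_def by simp
    then show ?thesis unfolding wk by simp
  qed
  have c1: "cos th \<noteq> 1"
  proof
    assume "cos th = 1"
    then obtain n :: int where n: "th = of_int n * 2 * pi" by (auto simp: cos_one_2pi_int)
    with th0 have a: "0 < pi * of_int n" "pi * of_int n < pi" by (auto simp: field_simps)
    from a(1) have "(0::real) < of_int n" by (simp add: zero_less_mult_iff)
    moreover from a(2) have "of_int n < (1::real)" by simp
    ultimately show False by simp
  qed
  have w1: "w \<noteq> 1" using c1 unfolding w_def by (auto simp: complex_eq_iff)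
  have g0: "(\<Sum>k<Suc N. w^k) = 0" using gsum_c[of w "Suc N"] wL w1 by simp
  have "(w - 1) * (\<Sum>k<Suc N. of_nat k * w^k) = of_real L"
    using ksum_c[of w "Suc N"] unfolding wL g0 L_def by simp
  then have ks: "(\<Sum>k<Suc N. of_nat k * w^k) = of_real L / (w - 1)"
    using w1 by (simp add: field_simps)
  have "(\<Sum>k<Suc N. of_real (real k / L - 1/2) * w^k) =
      (\<Sum>k<Suc N. of_nat k * w^k) / of_real L - (1/2) * (\<Sum>k<Suc N. w^k)"
  proof -
    have Lc: "complex_of_real L \<noteq> 0" using L0 by simp
    have t: "\<And>k. of_real (real k / L - 1/2) * w^k = of_nat k * w^k / of_real L - (1/2) * w^k"
      using Lc by (simp add: field_simps)
    show ?thesis unfolding t by (simp only: sum_subtractf sum_divide_distrib[symmetric] sum_distrib_left[symmetric])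
  qed
  also have "\<dots> = 1 / (w - 1)" unfolding ks g0 using L0 w1 by (simp add: field_simps)
  finally have s1: "(\<Sum>k<Suc N. of_real (real k / L - 1/2) * w^k) = 1 / (w - 1)" .
  have sp: "{..<Suc N} = insert 0 {1..N}" by auto
  have s2: "(\<Sum>k=1..N. of_real (real k / L - 1/2) * w^k) = 1 / (w - 1) + 1/2"
    using s1 unfolding sp by (simp add: algebra_simps)
  have re: "Re (1 / (w - 1)) = - 1/2"
  proof -
    have "Re (1 / (w - 1)) = (cos th - 1) / ((cos th - 1)^2 + (sin th)^2)"
      unfolding w_def by (simp add: Re_divide)
    also have "(cos th - 1)^2 + (sin th)^2 = 2 * (1 - cos th)"
      by (simp add: power2_eq_square algebra_simps sin_squared_eq)
    also have "(cos th - 1) / (2 * (1 - cos th)) = - 1/2"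
    proof -
      have c1': "1 - cos th \<noteq> 0" using c1 by simp
      have "cos th - 1 = - (1 - cos th)" by simp
      then show ?thesis using c1' by (simp add: field_simps)
    qed
    finally show ?thesis .
  qed
  have im: "Im (1 / (w - 1)) = - (1/2) * cot (th / 2)"
  proof -
    have "Im (1 / (w - 1)) = - sin th / ((cos th - 1)^2 + (sin th)^2)"
      unfolding w_def by (simp add: Im_divide)
    also have "(cos th - 1)^2 + (sin th)^2 = 2 * (1 - cos th)"
      by (simp add: power2_eq_square algebra_simps sin_squared_eq)
    also have "sin th = 2 * sin (th/2) * cos (th/2)" using sin_double[of "th/2"] by simp
    also have "1 - cos th = 2 * (sin (th/2))^2" using cos_double_sin[of "th/2"] by simp
    finally have e: "Im (1 / (w - 1)) = - (2 * sin (th/2) * cos (th/2)) / (2 * (2 * (sin (th/2))^2))" .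
    have "sin (th/2) > 0" using th0 by (intro sin_gt_zero) auto
    then show ?thesis unfolding e by (simp add: cot_def field_simps power2_eq_square)
  qed
  have "Re (\<Sum>k=1..N. of_real (real k / L - 1/2) * w^k) = (\<Sum>k=1..N. (real k / L - 1/2) * cos (real k * th))"
    unfolding wk by simp
  then show "(\<Sum>k=1..N. (real k / real (Suc N) - 1/2) * cos (real k * (2 * pi * real h / real (Suc N)))) = 0"
    unfolding s2 using re unfolding th_def L_def by simp
  have "Im (\<Sum>k=1..N. of_real (real k / L - 1/2) * w^k) = (\<Sum>k=1..N. (real k / L - 1/2) * sin (real k * th))"
    unfolding wk by simp
  moreover have "th / 2 = pi * real h / L" unfolding th_def by simp
  ultimately show "(\<Sum>k=1..N. (real k / real (Suc N) - 1/2) * sin (real k * (2 * pi * real h / real (Suc N))))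
           = - (1/2) * cot (pi * real h / real (Suc N))"
    unfolding s2 using im unfolding th_def L_def by simp
qed

lemma vk_sum0: "(\<Sum>k=1..N. (real k / real (Suc N) - 1/2)) = 0"
proof -
  have "(\<Sum>k=1..N. real k) = real N * (real N + 1) / 2"
    by (induction N) (simp_all add: field_simps)
  then have "(\<Sum>k=1..N. real k / real (Suc N)) = real N / 2"
    by (simp add: sum_divide_distrib[symmetric] field_simps)
  then show ?thesis by (simp add: sum_subtractf)
qed

lemma vp_fej:
  "vp N x = (1 / real (Suc N)) * (\<Sum>k=1..N. (real k / real (Suc N) - 1/2) * fej N (x - real k / real (Suc N)))
            - (1 / (pi * real (Suc N))) * (\<Sum>h=1..N. sin (2 * pi * real h * x))"
proof -
  define L where "L = real (Suc N)"
  have L0: "L > 0" unfolding L_def by simp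
  define v where "v k = real k / L - 1/2" for k :: nat
  define wt where "wt h = 1 - real h / L" for h :: nat
  have inner: "(\<Sum>k=1..N. v k * cos (2 * pi * real h * (x - real k / L))) = - (1/2) * cot (pi * real h / L) * sin (2 * pi * real h * x)"
    if h: "h \<in> {1..N}" for h
  proof -
    have arg: "2 * pi * real h * (x - real k / L) = 2 * pi * real h * x - real k * (2 * pi * real h / L)" for k
      by (simp add: algebra_simps)
    have "(\<Sum>k=1..N. v k * cos (2 * pi * real h * (x - real k / L))) =
          cos (2 * pi * real h * x) * (\<Sum>k=1..N. v k * cos (real k * (2 * pi * real h / L)))
        + sin (2 * pi * real h * x) * (\<Sum>k=1..N. v k * sin (real k * (2 * pi * real h / L)))"
      unfolding arg cos_diff by (simp add: sum_distrib_left sum.distrib algebra_simps)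
    also have "\<dots> = - (1/2) * cot (pi * real h / L) * sin (2 * pi * real h * x)"
      using vk_sums[of h N] h unfolding v_def L_def by simp
    finally show ?thesis .
  qed
  have "(\<Sum>k=1..N. v k * fej N (x - real k / L)) =
        (\<Sum>k=1..N. v k) + 2 * (\<Sum>k=1..N. \<Sum>h=1..N. wt h * (v k * cos (2 * pi * real h * (x - real k / L))))"
    unfolding fej_def L_def[symmetric] wt_def
    by (simp add: algebra_simps sum.distrib sum_distrib_left)
  also have "(\<Sum>k=1..N. v k) = 0" unfolding v_def L_def using vk_sum0[of N] by simp
  also have "(\<Sum>k=1..N. \<Sum>h=1..N. wt h * (v k * cos (2 * pi * real h * (x - real k / L))))
      = (\<Sum>h=1..N. wt h * (\<Sum>k=1..N. v k * cos (2 * pi * real h * (x - real k / L))))"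
    by (subst sum.swap) (simp add: sum_distrib_left)
  also have "\<dots> = (\<Sum>h=1..N. wt h * (- (1/2) * cot (pi * real h / L) * sin (2 * pi * real h * x)))"
    using inner by (intro sum.cong refl) auto
  finally have A: "(\<Sum>k=1..N. v k * fej N (x - real k / L)) =
      - (\<Sum>h=1..N. wt h * cot (pi * real h / L) * sin (2 * pi * real h * x))"
    by (simp add: sum_negf[symmetric] algebra_simps sum_distrib_left)
  have "vp N x = (\<Sum>h=1..N. -2 * (((wt h * cot (pi * real h / L) + 1/pi) / (2 * L)) * sin (2*pi*real h*x)))"
    unfolding vp_def gam_def wt_def L_def by (simp add: sum_distrib_left)
  also have "\<dots> = (\<Sum>h=1..N. (1/L) * (-(wt h * cot (pi*real h/L) * sin (2*pi*real h*x))) - (1/(pi*L)) * sin (2*pi*real h*x))"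
    using L0 by (intro sum.cong refl) (simp add: field_simps)
  also have "\<dots> = (1 / L) * (- (\<Sum>h=1..N. wt h * cot (pi * real h / L) * sin (2 * pi * real h * x)))
           - (1 / (pi * L)) * (\<Sum>h=1..N. sin (2 * pi * real h * x))"
    by (simp only: sum_subtractf sum_distrib_left[symmetric] sum_negf)
  also have "\<dots> = (1 / L) * (\<Sum>k=1..N. v k * fej N (x - real k / L))
           - (1 / (pi * L)) * (\<Sum>h=1..N. sin (2 * pi * real h * x))"
    by (simp only: A)
  finally show ?thesis unfolding v_def L_def .
qed

lemma not_Ints_shift:
  assumes "real (Suc N) * x \<notin> \<int>"
  shows "x - real k / real (Suc N) \<notin> \<int>"
proof
  assume "x - real k / real (Suc N) \<in> \<int>"
  then obtain j where j: "x - real k / real (Suc N) = of_int j" by (auto elim: Ints_cases)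
  then have "real (Suc N) * x = of_int (int k + j * int (Suc N))" by (simp add: field_simps)
  then show False using assms by (metis Ints_of_int)
qed

lemma neg1sq: "((-1::real)^k)^2 = 1"
  by (simp add: power2_eq_square power_mult_distrib[symmetric])

lemma sin_sq_shift: "(sin (a - real k * pi))^2 = (sin a)^2"
  by (simp add: sin_diff power_mult_distrib neg1sq)

lemma vp_closed:
  assumes nz: "real (Suc N) * x \<notin> \<int>"
  shows "vp N x = (sin (pi * real (Suc N) * x))^2 / (real (Suc N))^2 *
                 (\<Sum>k=1..N. (real k / real (Suc N) - 1/2) / (sin (pi * (x - real k / real (Suc N))))^2)
                - sin (pi * real N * x) * sin (pi * real (Suc N) * x) / (pi * real (Suc N) * sin (pi * x))"
proof -
  define L where "L = real (Suc N)"
  have L0: "L > 0" unfolding L_def by simp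
  have x0: "x \<notin> \<int>" using not_Ints_shift[OF nz, of 0] by simp
  have sx: "sin (pi * x) \<noteq> 0" using sin_pi_nz[OF x0] .
  have fk: "fej N (x - real k / L) = (sin (pi * L * x))^2 / (L * (sin (pi * (x - real k / L)))^2)" for k
  proof -
    have s: "sin (pi * (x - real k / L)) \<noteq> 0" using sin_pi_nz[OF not_Ints_shift[OF nz, of k]] unfolding L_def .
    have "(sin (pi * (x - real k / L)))^2 * fej N (x - real k / L) = (sin (pi * L * (x - real k / L)))^2 / L"
      using fej_closed[of "x - real k / L" N] unfolding L_def by simp
    also have "pi * L * (x - real k / L) = pi * L * x - real k * pi" using L0 by (simp add: field_simps)
    also have "(sin (pi * L * x - real k * pi))^2 = (sin (pi * L * x))^2" by (rule sin_sq_shift)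
    finally show ?thesis using s L0 by (simp add: field_simps)
  qed
  have ss: "(\<Sum>h=1..N. sin (2 * pi * real h * x)) = sin (pi * real N * x) * sin (pi * L * x) / sin (pi * x)"
  proof -
    have "sin (pi * x) * (\<Sum>h=1..N. sin (2 * real h * (pi * x))) = sin (real N * (pi * x)) * sin (real (Suc N) * (pi * x))"
      by (rule sin_sum_closed)
    then show ?thesis using sx unfolding L_def by (simp add: field_simps mult_ac)
  qed
  have "vp N x = (1 / L) * (\<Sum>k=1..N. (real k / L - 1/2) * ((sin (pi * L * x))^2 / (L * (sin (pi * (x - real k / L)))^2)))
            - (1 / (pi * L)) * (sin (pi * real N * x) * sin (pi * L * x) / sin (pi * x))"
    unfolding vp_fej L_def[symmetric] fk ss ..
  also have "(1 / L) * (\<Sum>k=1..N. (real k / L - 1/2) * ((sin (pi * L * x))^2 / (L * (sin (pi * (x - real k / L)))^2)))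
      = (sin (pi * L * x))^2 / L^2 * (\<Sum>k=1..N. (real k / L - 1/2) / (sin (pi * (x - real k / L)))^2)"
    using L0 by (simp add: sum_distrib_left power2_eq_square field_simps)
  finally show ?thesis unfolding L_def by simp
qed

lemma pt_pos:
  fixes d :: real assumes "d < 0"
  shows "1/(d-1) - 1/d \<le> 1/d^2" "1/d^2 \<le> 1/(d-1) - 1/d + 1/d^2 - 1/(d-1)^2"
proof -
  define e where "e = - d"
  have e: "e > 0" using assms unfolding e_def by simp
  have d: "d = - e" unfolding e_def by simp
  have a: "1/(d-1) - 1/d = 1/(e*(e+1))"
  proof -
    have "d \<noteq> 0" "d - 1 \<noteq> 0" using assms by auto
    then have "1/(d-1) - 1/d = 1/((d-1)*d)" by (simp add: field_simps)
    also have "(d-1)*d = e*(e+1)" unfolding d by (simp add: algebra_simps)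
    finally show ?thesis .
  qed
  have b: "1/d^2 = 1/(e*e)" unfolding d by (simp add: power2_eq_square)
  have c: "1/(d-1)^2 = 1/((e+1)*(e+1))" unfolding d by (simp add: power2_eq_square algebra_simps)
  have "e * e \<le> e * (e + 1)" using e by simp
  then have "1/(e*(e+1)) \<le> 1/(e*e)" using e by (intro divide_left_mono) auto
  then show "1/(d-1) - 1/d \<le> 1/d^2" unfolding a b .
  have "e * (e + 1) \<le> (e+1)*(e+1)" using e by simp
  then have "1/((e+1)*(e+1)) \<le> 1/(e*(e+1))" using e by (intro divide_left_mono) auto
  then show "1/d^2 \<le> 1/(d-1) - 1/d + 1/d^2 - 1/(d-1)^2" unfolding a b c by simp
qed

lemma pt_neg:
  fixes d :: real assumes "d > 1"
  shows "1/(d-1) - 1/d - (1/(d-1)^2 - 1/d^2) \<le> 1/d^2" "1/d^2 \<le> 1/(d-1) - 1/d"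
proof -
  have a: "1/(d-1) - 1/d = 1/(d*(d-1))" using assms by (simp add: field_simps)
  have b: "1/d^2 = 1/(d*d)" by (simp add: power2_eq_square)
  have c: "1/(d-1)^2 = 1/((d-1)*(d-1))" by (simp add: power2_eq_square)
  have "d * (d - 1) \<le> d * d" using assms by simp
  then have "1/(d*d) \<le> 1/(d*(d-1))" using assms by (intro divide_left_mono) auto
  then show "1/d^2 \<le> 1/(d-1) - 1/d" unfolding a b .
  have "(d - 1) * (d - 1) \<le> d * (d - 1)" using assms by simp
  then have "1/(d*(d-1)) \<le> 1/((d-1)*(d-1))" using assms by (intro divide_left_mono) auto
  then show "1/(d-1) - 1/d - (1/(d-1)^2 - 1/d^2) \<le> 1/d^2" unfolding a b c by simp
qed

locale vsetup =
  fixes N :: nat and y :: real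
  assumes y0: "0 < y" and yL: "y < real (Suc N)" and yZ: "y \<notin> \<int>"
begin

definition "L = real (Suc N)"
definition "bl n = (\<Sum>k<Suc N. 1 / (y - (of_int n * L + real k))^2)"
definition "r n = 1 / (y - of_int n * L)"
definition "q n = 1 / (y - of_int n * L)^2"

lemma L0: "L > 0" unfolding L_def by simp

lemma tele_r: "(\<Sum>k<Suc N. 1/(y - (of_int n * L + real k) - 1) - 1/(y - (of_int n * L + real k))) = r (n+1) - r n"
proof -
  define f where "f k = 1 / (y - (of_int n * L + real k))" for k :: nat
  have eq: "1/(y - (of_int n * L + real k) - 1) - 1/(y - (of_int n * L + real k)) = f (Suc k) - f k" for k
    unfolding f_def by (simp add: algebra_simps)
  have "(\<Sum>k<Suc N. f (Suc k) - f k) = f (Suc N) - f 0" by (rule sum_lessThan_telescope)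
  moreover have "f (Suc N) = r (n+1)" unfolding f_def r_def L_def by (simp add: algebra_simps)
  moreover have "f 0 = r n" unfolding f_def r_def by simp
  ultimately show ?thesis unfolding eq by simp
qed

lemma tele_q: "(\<Sum>k<Suc N. 1/(y - (of_int n * L + real k))^2 - 1/(y - (of_int n * L + real k) - 1)^2) = q n - q (n+1)"
proof -
  define f where "f k = 1 / (y - (of_int n * L + real k))^2" for k :: nat
  have eq: "1/(y - (of_int n * L + real k))^2 - 1/(y - (of_int n * L + real k) - 1)^2 = - (f (Suc k) - f k)" for k
    unfolding f_def by (simp add: algebra_simps)
  have "(\<Sum>k<Suc N. f (Suc k) - f k) = f (Suc N) - f 0" by (rule sum_lessThan_telescope)
  moreover have "f (Suc N) = q (n+1)" unfolding f_def q_def L_def by (simp add: algebra_simps)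
  moreover have "f 0 = q n" unfolding f_def q_def by simp
  ultimately show ?thesis unfolding eq sum_negf by simp
qed

lemma block_pos:
  assumes n: "n \<ge> 1"
  shows "r (n+1) - r n \<le> bl n" "bl n \<le> r (n+1) - r n + q n - q (n+1)"
proof -
  have d: "y - (of_int n * L + real k) < 0" for k
  proof -
    have "(of_int n - 1) * L \<ge> 0" using n L0 by (intro mult_nonneg_nonneg) auto
    moreover have "(of_int n - 1) * L = of_int n * L - L" by (simp add: algebra_simps)
    moreover have "real k \<ge> 0" by simp
    ultimately show ?thesis using yL L_def by linarith
  qed
  have "(\<Sum>k<Suc N. 1/(y - (of_int n * L + real k) - 1) - 1/(y - (of_int n * L + real k))) \<le> bl n"
    unfolding bl_def by (intro sum_mono pt_pos(1) d)
  then show "r (n+1) - r n \<le> bl n" unfolding tele_r .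
  have "bl n \<le> (\<Sum>k<Suc N. (1/(y - (of_int n * L + real k) - 1) - 1/(y - (of_int n * L + real k)))
       + (1/(y - (of_int n * L + real k))^2 - 1/(y - (of_int n * L + real k) - 1)^2))"
    unfolding bl_def by (intro sum_mono) (use pt_pos(2)[OF d] in simp)
  also have "\<dots> = r (n+1) - r n + (q n - q (n+1))"
    unfolding sum.distrib tele_r tele_q ..
  finally show "bl n \<le> r (n+1) - r n + q n - q (n+1)" by simp
qed

lemma block_neg:
  assumes n: "n \<le> -1"
  shows "r (n+1) - r n - q (n+1) + q n \<le> bl n" "bl n \<le> r (n+1) - r n"
proof -
  have d: "y - (of_int n * L + real k) > 1" if k: "k < Suc N" for k
  proof -
    have "of_int n * L \<le> (-1) * L" using n L0 by (intro mult_right_mono) auto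
    moreover have "real k + 1 \<le> L" using k unfolding L_def by simp
    ultimately show ?thesis using y0 by simp
  qed
  have "bl n \<le> (\<Sum>k<Suc N. 1/(y - (of_int n * L + real k) - 1) - 1/(y - (of_int n * L + real k)))"
    unfolding bl_def by (intro sum_mono pt_neg(2) d) simp
  then show "bl n \<le> r (n+1) - r n" unfolding tele_r .
  have "(\<Sum>k<Suc N. (1/(y - (of_int n * L + real k) - 1) - 1/(y - (of_int n * L + real k)))
       - (1/(y - (of_int n * L + real k) - 1)^2 - 1/(y - (of_int n * L + real k))^2)) \<le> bl n"
    unfolding bl_def by (intro sum_mono) (use pt_neg(1)[OF d] in simp)
  moreover have "(\<Sum>k<Suc N. (1/(y - (of_int n * L + real k) - 1) - 1/(y - (of_int n * L + real k)))
       - (1/(y - (of_int n * L + real k) - 1)^2 - 1/(y - (of_int n * L + real k))^2))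
      = r (n+1) - r n - q (n+1) + q n"
  proof -
    have "(\<Sum>k<Suc N. (1/(y - (of_int n * L + real k) - 1) - 1/(y - (of_int n * L + real k)))
       - (1/(y - (of_int n * L + real k) - 1)^2 - 1/(y - (of_int n * L + real k))^2))
      = (\<Sum>k<Suc N. (1/(y - (of_int n * L + real k) - 1) - 1/(y - (of_int n * L + real k))))
       + (\<Sum>k<Suc N. 1/(y - (of_int n * L + real k))^2 - 1/(y - (of_int n * L + real k) - 1)^2)"
      by (simp add: sum.distrib[symmetric] algebra_simps)
    then show ?thesis unfolding tele_r tele_q by simp
  qed
  ultimately show "r (n+1) - r n - q (n+1) + q n \<le> bl n" by simp
qed

lemma q_nonneg: "q n \<ge> 0" unfolding q_def by simp

lemma abel_step_pos:
  fixes mr R0 R1 P Q Q0 Q1 B :: real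
  assumes "mr*R0 \<le> P" "P \<le> mr*R0 + Q - mr*Q0" "R1 - R0 \<le> B" "B \<le> R1 - R0 + Q0 - Q1" "mr \<ge> 0"
  shows "(mr+1)*R1 \<le> P + (mr+1)*B + R0 \<and> P + (mr+1)*B + R0 \<le> (mr+1)*R1 + (Q + Q0) - (mr+1)*Q1"
proof -
  have m: "mr + 1 \<ge> 0" using assms by simp
  have h1: "(mr+1)*(R1 - R0) \<le> (mr+1)*B" using mult_left_mono[OF assms(3) m] .
  have h2: "(mr+1)*B \<le> (mr+1)*(R1 - R0 + Q0 - Q1)" using mult_left_mono[OF assms(4) m] .
  show ?thesis using h1 h2 assms(1,2) unfolding ring_distribs by linarith
qed

lemma abel_step_neg:
  fixes mr R0 R1 P Q Q0 Q1 B r0 :: real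
  assumes "(mr+1)*R0 - r0 \<le> P" "P \<le> (mr+1)*R0 - r0 + Q - mr*Q0" "R0 - R1 - Q0 + Q1 \<le> B" "B \<le> R0 - R1" "mr \<ge> 0"
  shows "(mr+2)*R1 - r0 \<le> P - (mr+1)*B + R1 \<and> P - (mr+1)*B + R1 \<le> (mr+2)*R1 - r0 + (Q + Q0) - (mr+1)*Q1"
proof -
  have m: "mr + 1 \<ge> 0" using assms by simp
  have h1: "(mr+1)*(R0 - R1 - Q0 + Q1) \<le> (mr+1)*B" using mult_left_mono[OF assms(3) m] .
  have h2: "(mr+1)*B \<le> (mr+1)*(R0 - R1)" using mult_left_mono[OF assms(4) m] .
  show ?thesis using h1 h2 assms(1,2) unfolding ring_distribs by linarith
qed

lemma pos_abel:
  "real m * r (int (Suc m)) \<le> (\<Sum>n\<in>{1..<int (Suc m)}. of_int n * bl n + r n) \<and>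
   (\<Sum>n\<in>{1..<int (Suc m)}. of_int n * bl n + r n) \<le>
      real m * r (int (Suc m)) + (\<Sum>n\<in>{1..<int (Suc m)}. q n) - real m * q (int (Suc m))"
proof (induction m)
  case 0 then show ?case by simp
next
  case (Suc m)
  define a where "a = int (Suc m)"
  have e: "{1..<int (Suc (Suc m))} = insert a {1..<a}" unfolding a_def by auto
  have i1: "int (Suc (Suc m)) = a + 1" unfolding a_def by simp
  define P where "P = (\<Sum>n\<in>{1..<a}. of_int n * bl n + r n)"
  define Q where "Q = (\<Sum>n\<in>{1..<a}. q n)"
  have b: "r (a + 1) - r a \<le> bl a" "bl a \<le> r (a + 1) - r a + q a - q (a + 1)"
    using block_pos[of a] unfolding a_def by auto
  have s1: "(\<Sum>n\<in>{1..<int (Suc (Suc m))}. of_int n * bl n + r n) = P + (real m + 1) * bl a + r a"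
    unfolding e P_def by (simp add: a_def)
  have s2: "(\<Sum>n\<in>{1..<int (Suc (Suc m))}. q n) = Q + q a"
    unfolding e Q_def by (simp add: a_def)
  have ih: "real m * r a \<le> P" "P \<le> real m * r a + Q - real m * q a"
    using Suc.IH unfolding P_def Q_def a_def by auto
  have rs: "real (Suc m) = real m + 1" by simp
  show ?case unfolding s1 s2 unfolding i1 rs using abel_step_pos[OF ih b] by simp
qed

lemma neg_abel:
  "real (Suc m) * r (- int m) - r 0 \<le> (\<Sum>n\<in>{- int m..<0}. of_int n * bl n + r n) \<and>
   (\<Sum>n\<in>{- int m..<0}. of_int n * bl n + r n) \<le>
      real (Suc m) * r (- int m) - r 0 + (\<Sum>n\<in>{- int m<..0}. q n) - real m * q (- int m)"
proof (induction m)
  case 0 then show ?case by simp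
next
  case (Suc m)
  define a where "a = - int m"
  have e: "{- int (Suc m)..<0} = insert (a - 1) {a..<0}" unfolding a_def by auto
  have e2: "{- int (Suc m)<..0} = insert a {a<..0}" unfolding a_def by auto
  have i1: "- int (Suc m) = a - 1" unfolding a_def by simp
  define P where "P = (\<Sum>n\<in>{a..<0}. of_int n * bl n + r n)"
  define Q where "Q = (\<Sum>n\<in>{a<..0}. q n)"
  have b: "r a - r (a - 1) - q a + q (a - 1) \<le> bl (a - 1)" "bl (a - 1) \<le> r a - r (a - 1)"
    using block_neg[of "a - 1"] unfolding a_def by auto
  have s1: "(\<Sum>n\<in>{- int (Suc m)..<0}. of_int n * bl n + r n) = P - (real m + 1) * bl (a - 1) + r (a - 1)"
    unfolding e P_def by (simp add: a_def algebra_simps)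
  have s2: "(\<Sum>n\<in>{- int (Suc m)<..0}. q n) = Q + q a"
    unfolding e2 Q_def by (simp add: a_def)
  have ih: "(real m + 1) * r a - r 0 \<le> P" "P \<le> (real m + 1) * r a - r 0 + Q - real m * q a"
    using Suc.IH unfolding P_def Q_def a_def of_nat_Suc by (simp_all add: add.commute)
  have rs: "real (Suc (Suc m)) = real m + 2" "real (Suc m) = real m + 1" by simp_all
  show ?case unfolding s1 s2 unfolding i1 rs using abel_step_neg[OF ih b] by simp
qed

definition "W M = (\<Sum>n\<in>{- int M..<int M}. of_int n * bl n + r n)"
definition "eps M = real (Suc M) * r (- int M) + (real M - 1) * r (int M)"

lemma W_bounds:
  assumes M: "M \<ge> 1"
  shows "eps M \<le> W M" "W M \<le> eps M + (\<Sum>n\<in>{- int M..<int M}. q n)"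
proof -
  obtain m where m: "M = Suc m" using M by (cases M) auto
  have sp: "{- int M..<int M} = {- int M..<0} \<union> ({0} \<union> {1..<int M})" using M by auto
  have W: "W M = (\<Sum>n\<in>{- int M..<0}. of_int n * bl n + r n) + r 0 + (\<Sum>n\<in>{1..<int M}. of_int n * bl n + r n)"
    unfolding W_def sp by (subst sum.union_disjoint; auto simp: sum.union_disjoint)
  have sq: "(\<Sum>n\<in>{- int M<..0}. q n) + (\<Sum>n\<in>{1..<int M}. q n) \<le> (\<Sum>n\<in>{- int M..<int M}. q n)"
  proof -
    have "(\<Sum>n\<in>{- int M<..0}. q n) + (\<Sum>n\<in>{1..<int M}. q n) = (\<Sum>n\<in>{- int M<..0} \<union> {1..<int M}. q n)"
      by (subst sum.union_disjoint) auto
    also have "\<dots> \<le> (\<Sum>n\<in>{- int M..<int M}. q n)"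
      by (intro sum_mono2) (auto simp: q_nonneg)
    finally show ?thesis .
  qed
  have qm: "real M * q (- int M) \<ge> 0" "real m * q (int M) \<ge> 0" using q_nonneg by auto
  have p: "real m * r (int M) \<le> (\<Sum>n\<in>{1..<int M}. of_int n * bl n + r n)"
          "(\<Sum>n\<in>{1..<int M}. of_int n * bl n + r n) \<le> real m * r (int M) + (\<Sum>n\<in>{1..<int M}. q n) - real m * q (int M)"
    using pos_abel[of m] unfolding m by auto
  have n: "real (Suc M) * r (- int M) - r 0 \<le> (\<Sum>n\<in>{- int M..<0}. of_int n * bl n + r n)"
          "(\<Sum>n\<in>{- int M..<0}. of_int n * bl n + r n) \<le> real (Suc M) * r (- int M) - r 0 + (\<Sum>n\<in>{- int M<..0}. q n) - real M * q (- int M)"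
    using neg_abel[of M] by auto
  have em: "real M - 1 = real m" unfolding m by simp
  show "eps M \<le> W M" unfolding W eps_def em using p n by simp
  show "W M \<le> eps M + (\<Sum>n\<in>{- int M..<int M}. q n)" unfolding W eps_def em using p n sq qm by simp
qed

end

lemma block_reindex:
  "(\<Sum>k<S. g (c + int k)) = (\<Sum>j\<in>{c..<c + int S}. (g j :: real))"
proof (induction S)
  case 0 then show ?case by simp
next
  case (Suc S)
  have e: "{c..<c + int (Suc S)} = insert (c + int S) {c..<c + int S}" by auto
  show ?case unfolding e using Suc by simp
qed

lemma blocks_reindex:
  "(\<Sum>n\<in>{a..<a + int m}. \<Sum>k<S. g (n * int S + int k)) = (\<Sum>j\<in>{a * int S..<(a + int m) * int S}. (g j :: real))"
proof (induction m)
  case 0 then show ?case by simp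
next
  case (Suc m)
  have e: "{a..<a + int (Suc m)} = insert (a + int m) {a..<a + int m}" by auto
  have le1: "a * int S \<le> (a + int m) * int S"
  proof -
    have "0 \<le> int m * int S" by simp
    then show ?thesis by (simp add: algebra_simps)
  qed
  have e2: "{a * int S..<(a + int (Suc m)) * int S} = {a * int S..<(a + int m) * int S} \<union> {(a + int m) * int S..<(a + int m) * int S + int S}"
    using ivl_disj_un_two(3)[OF le1, of "(a + int m) * int S + int S"] by (simp add: algebra_simps)
  have "(\<Sum>j\<in>{a * int S..<(a + int (Suc m)) * int S}. g j) =
        (\<Sum>j\<in>{a * int S..<(a + int m) * int S}. g j) + (\<Sum>j\<in>{(a + int m) * int S..<(a + int m) * int S + int S}. g j)"
    unfolding e2 by (rule sum.union_disjoint) auto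
  then show ?case unfolding e using Suc block_reindex[of g "(a + int m) * int S" S] by simp
qed

lemma sym_blocks:
  "(\<Sum>n\<in>{- int M..<int M}. \<Sum>k<S. g (n * int S + int k)) = (\<Sum>j\<in>{- int (M * S)..<int (M * S)}. (g j :: real))"
  using blocks_reindex[where a="- int M" and m="2 * M" and S=S and g=g] by (simp add: algebra_simps)

lemma subseq_lim:
  assumes "(\<lambda>M. X M) \<longlonglongrightarrow> (l::real)"
  shows "(\<lambda>M. X (M * Suc N)) \<longlonglongrightarrow> l"
proof -
  have "strict_mono (\<lambda>M::nat. M * Suc N)" by (intro strict_monoI mult_less_mono1) auto
  from LIMSEQ_subseq_LIMSEQ[OF assms this] show ?thesis by (simp add: o_def)
qed

context vsetup
begin

definition "A M = (\<Sum>n\<in>{- int M..<int M}. \<Sum>k<Suc N. 1 / (y - (of_int n * L + real k))^2)"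
definition "Bk k M = (\<Sum>n\<in>{- int M..<int M}. 1 / (y - (of_int n * L + real k))^2)"
definition "C M = (\<Sum>n\<in>{- int M..<int M}. \<Sum>k<Suc N. 1 / (y - (of_int n * L + real k)))"
definition "E M = (\<Sum>n\<in>{- int M..<int M}. r n)"
definition "c k = real k / L - 1/2"

lemma d_nz: "y - (of_int n * L + real k) \<noteq> 0"
proof
  assume "y - (of_int n * L + real k) = 0"
  then have "y = of_int (n * int (Suc N) + int k)" unfolding L_def by simp
  then show False using yZ by (metis Ints_of_int)
qed

lemma W_ident: "W M = (y / L - 1/2) * A M - (\<Sum>k<Suc N. c k * Bk k M) - C M / L + E M"
proof -
  have per: "(y / L - 1/2) * (\<Sum>k<Suc N. 1 / (y - (of_int n * L + real k))^2)
      - (\<Sum>k<Suc N. c k * (1 / (y - (of_int n * L + real k))^2))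
      - (\<Sum>k<Suc N. 1 / (y - (of_int n * L + real k))) / L + r n = of_int n * bl n + r n" for n
  proof -
    have t: "(y / L - 1/2) * (1 / (y - (of_int n * L + real k))^2) - c k * (1 / (y - (of_int n * L + real k))^2)
        - (1 / (y - (of_int n * L + real k))) / L = of_int n * (1 / (y - (of_int n * L + real k))^2)" for k
    proof -
      define d where "d = y - (of_int n * L + real k)"
      have d0: "d \<noteq> 0" unfolding d_def by (rule d_nz)
      have "y / L - 1/2 - c k = (d + of_int n * L) / L" unfolding c_def d_def using L0 by (simp add: field_simps)
      then have "(y / L - 1/2) * (1 / d^2) - c k * (1 / d^2) - (1 / d) / L = ((d + of_int n * L) / L) / d^2 - (1/d)/L"
        by (simp add: algebra_simps)
      also have "\<dots> = of_int n * (1 / d^2)" using d0 L0 by (simp add: field_simps power2_eq_square)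
      finally show ?thesis unfolding d_def .
    qed
    have "(y / L - 1/2) * (\<Sum>k<Suc N. 1 / (y - (of_int n * L + real k))^2)
      - (\<Sum>k<Suc N. c k * (1 / (y - (of_int n * L + real k))^2))
      - (\<Sum>k<Suc N. 1 / (y - (of_int n * L + real k))) / L
      = (\<Sum>k<Suc N. (y / L - 1/2) * (1 / (y - (of_int n * L + real k))^2) - c k * (1 / (y - (of_int n * L + real k))^2)
        - (1 / (y - (of_int n * L + real k))) / L)"
      by (simp only: sum_subtractf sum_distrib_left[symmetric] sum_divide_distrib[symmetric])
    also have "\<dots> = of_int n * bl n" unfolding t bl_def by (simp only: sum_distrib_left)
    finally show ?thesis by simp
  qed
  have sw: "(\<Sum>k<Suc N. c k * Bk k M) = (\<Sum>n\<in>{- int M..<int M}. \<Sum>k<Suc N. c k * (1 / (y - (of_int n * L + real k))^2))"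
    unfolding Bk_def by (subst sum.swap) (simp add: sum_distrib_left)
  have "(y / L - 1/2) * A M - (\<Sum>k<Suc N. c k * Bk k M) - C M / L + E M
      = (\<Sum>n\<in>{- int M..<int M}. (y / L - 1/2) * (\<Sum>k<Suc N. 1 / (y - (of_int n * L + real k))^2)
      - (\<Sum>k<Suc N. c k * (1 / (y - (of_int n * L + real k))^2))
      - (\<Sum>k<Suc N. 1 / (y - (of_int n * L + real k))) / L + r n)"
    unfolding sw A_def C_def E_def
    by (simp only: sum_subtractf sum.distrib sum_distrib_left[symmetric] sum_divide_distrib[symmetric])
  also have "\<dots> = W M" unfolding per W_def ..
  finally show ?thesis by simp
qed

lemma z_not_Ints: "(y - real k) / L \<notin> \<int>"
proof
  assume "(y - real k) / L \<in> \<int>"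
  then obtain j where "(y - real k) / L = of_int j" by (auto elim: Ints_cases)
  then have "y = of_int (int k + j * int (Suc N))" using L0 unfolding L_def by (simp add: field_simps)
  then show False using yZ by (metis Ints_of_int)
qed

lemma A_lim: "A \<longlonglongrightarrow> (pi / sin (pi * y))^2"
proof -
  have "A = (\<lambda>M. (\<Sum>j\<in>{- int (M * Suc N)..<int (M * Suc N)}. 1 / (y - of_int j)^2))"
    unfolding A_def[abs_def] L_def using sym_blocks[where S="Suc N" and g="\<lambda>j. 1 / (y - of_int j)^2"] by (simp add: algebra_simps)
  then show ?thesis using subseq_lim[OF PF_sq[OF yZ], of N] by simp
qed

lemma C_lim: "C \<longlonglongrightarrow> pi * cot (pi * y)"
proof -
  have "C = (\<lambda>M. (\<Sum>j\<in>{- int (M * Suc N)..<int (M * Suc N)}. 1 / (y - of_int j)))"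
    unfolding C_def[abs_def] L_def using sym_blocks[where S="Suc N" and g="\<lambda>j. 1 / (y - of_int j)"] by (simp add: algebra_simps)
  then show ?thesis using subseq_lim[OF PF_cot[OF yZ], of N] by simp
qed

lemma Bk_lim: "(\<lambda>M. Bk k M) \<longlonglongrightarrow> (1 / L^2) * (pi / sin (pi * ((y - real k) / L)))^2"
proof -
  have "Bk k M = (1 / L^2) * (\<Sum>n\<in>{- int M..<int M}. 1 / ((y - real k) / L - of_int n)^2)" for M
  proof -
    have "1 / (y - (of_int n * L + real k))^2 = (1 / L^2) * (1 / ((y - real k) / L - of_int n)^2)" for n
    proof -
      have "y - (of_int n * L + real k) = L * ((y - real k) / L - of_int n)" using L0 by (simp add: field_simps)
      then show ?thesis by (simp add: power_mult_distrib)
    qed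
    then show ?thesis unfolding Bk_def by (simp add: sum_distrib_left)
  qed
  then have "(\<lambda>M. Bk k M) = (\<lambda>M. (1 / L^2) * (\<Sum>n\<in>{- int M..<int M}. 1 / ((y - real k) / L - of_int n)^2))" by (rule ext)
  then show ?thesis using tendsto_mult_left[OF PF_sq[OF z_not_Ints[of k]], of "1 / L^2"] by simp
qed

lemma E_lim: "E \<longlonglongrightarrow> (1 / L) * (pi * cot (pi * (y / L)))"
proof -
  have x0: "y / L \<notin> \<int>" using z_not_Ints[of 0] by simp
  have "E M = (1 / L) * (\<Sum>n\<in>{- int M..<int M}. 1 / (y / L - of_int n))" for M
  proof -
    have "r n = (1 / L) * (1 / (y / L - of_int n))" for n
      unfolding r_def using L0 by (simp add: field_simps)
    then show ?thesis unfolding E_def by (simp add: sum_distrib_left)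
  qed
  then have "E = (\<lambda>M. (1 / L) * (\<Sum>n\<in>{- int M..<int M}. 1 / (y / L - of_int n)))" by (rule ext)
  then show ?thesis using tendsto_mult_left[OF PF_cot[OF x0], of "1 / L"] by simp
qed

lemma eps_lim: "eps \<longlonglongrightarrow> 0"
proof -
  have "eps M = (real M + 1) / (y + real M * L) + (real M - 1) / (y - real M * L)" for M
    unfolding eps_def r_def by (simp add: algebra_simps)
  then have "eps = (\<lambda>M. (real M + 1) / (y + real M * L) + (real M - 1) / (y - real M * L))" by (rule ext)
  moreover have "(\<lambda>M. (real M + 1) / (y + real M * L) + (real M - 1) / (y - real M * L)) \<longlonglongrightarrow> 0"
    using L0 by real_asymp
  ultimately show ?thesis by simp
qed

definition "Wl = (y / L - 1/2) * (pi / sin (pi * y))^2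
   - (\<Sum>k<Suc N. c k * ((1 / L^2) * (pi / sin (pi * ((y - real k) / L)))^2))
   - pi * cot (pi * y) / L + (1 / L) * (pi * cot (pi * (y / L)))"

lemma W_lim: "W \<longlonglongrightarrow> Wl"
proof -
  have "(\<lambda>M. (y / L - 1/2) * A M - (\<Sum>k<Suc N. c k * Bk k M) - C M / L + E M) \<longlonglongrightarrow> Wl"
    unfolding Wl_def
    using L0 by (intro tendsto_intros A_lim C_lim E_lim Bk_lim tendsto_sum) auto
  then show ?thesis unfolding W_ident[abs_def] .
qed

lemma Wl_bounds: "0 \<le> Wl" "Wl \<le> (1 / L^2) * (pi / sin (pi * (y / L)))^2"
proof -
  have ev: "eventually (\<lambda>M. M \<ge> 1) sequentially" by (rule eventually_ge_at_top)
  have lo: "eventually (\<lambda>M. eps M \<le> W M) sequentially"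
    using ev by eventually_elim (rule W_bounds(1))
  have hi: "eventually (\<lambda>M. W M \<le> eps M + Bk 0 M) sequentially"
    using ev by eventually_elim (use W_bounds(2) in \<open>simp add: Bk_def q_def\<close>)
  show "0 \<le> Wl" using tendsto_le[OF _ W_lim eps_lim lo] by simp
  have "(\<lambda>M. eps M + Bk 0 M) \<longlonglongrightarrow> 0 + (1 / L^2) * (pi / sin (pi * ((y - real 0) / L)))^2"
    by (intro tendsto_intros eps_lim Bk_lim)
  then show "Wl \<le> (1 / L^2) * (pi / sin (pi * (y / L)))^2"
    using tendsto_le[OF _ _ W_lim hi] by simp
qed

end

lemma key_alg:
  fixes a b LN p n S1 x h :: real
  assumes "a \<noteq> 0" "b \<noteq> 0" "LN \<noteq> 0" "p \<noteq> 0"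
  shows "p^2 * ((x - 1/2) - (a^2 / LN^2 * S1 - n * a / (p * LN * b)))
       = a^2 * (((x - 1/2) * (p^2 / a^2) + (1/2) * h - (p^2 / LN^2) * S1 + p * n / (LN * b * a)) - (1/2) * h)"
  using assms by (simp add: field_simps power2_eq_square)

lemma vaaler_open:
  assumes x: "0 < x" "x < 1" and nz: "real (Suc N) * x \<notin> \<int>"
  shows "\<bar>psi x - vp N x\<bar> \<le> fej N x / (2 * real (Suc N))"
proof -
  define LN where "LN = real (Suc N)"
  define y where "y = LN * x"
  have LN0: "LN > 0" unfolding LN_def by simp
  interpret vsetup N y
    by unfold_locales (use x nz in \<open>auto simp: y_def LN_def\<close>)
  have LL: "vsetup.L N = LN" using L_def LN_def by simp
  have yx: "y / LN = x" unfolding y_def using LN0 by simp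
  have x0: "x \<notin> \<int>" using not_Ints_shift[OF nz, of 0] by simp
  have sx: "sin (pi * x) \<noteq> 0" using sin_pi_nz[OF x0] .
  have sy: "sin (pi * y) \<noteq> 0" using sin_pi_nz[OF yZ] .
  have psix: "psi x = x - 1/2"
  proof -
    have "\<lfloor>x\<rfloor> = 0" using x by (simp add: floor_eq_iff)
    then show ?thesis unfolding psi_def by simp
  qed
  define S1 where "S1 = (\<Sum>k=1..N. (real k / LN - 1/2) / (sin (pi * (x - real k / LN)))^2)"
  have i: "(\<Sum>k<Suc N. c k * ((1 / LN^2) * (pi / sin (pi * ((y - real k) / LN)))^2))
      = - (1/2) * (pi^2 / (LN^2 * (sin (pi * x))^2)) + (pi^2 / LN^2) * S1"
  proof -
    have sp: "{..<Suc N} = insert 0 {1..N}" by auto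
    have t: "c k * ((1 / LN^2) * (pi / sin (pi * ((y - real k) / LN)))^2) = (pi^2 / LN^2) * ((real k / LN - 1/2) / (sin (pi * (x - real k / LN)))^2)" for k
    proof -
      have "(y - real k) / LN = x - real k / LN" unfolding y_def using LN0 by (simp add: field_simps)
      then show ?thesis unfolding c_def LL by (simp add: power_divide)
    qed
    have "(\<Sum>k<Suc N. c k * ((1 / LN^2) * (pi / sin (pi * ((y - real k) / LN)))^2))
        = c 0 * ((1 / LN^2) * (pi / sin (pi * ((y - real 0) / LN)))^2) + (\<Sum>k=1..N. c k * ((1 / LN^2) * (pi / sin (pi * ((y - real k) / LN)))^2))"
      unfolding sp by (subst sum.insert) auto
    also have "(\<Sum>k=1..N. c k * ((1 / LN^2) * (pi / sin (pi * ((y - real k) / LN)))^2))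
        = (\<Sum>k=1..N. (pi^2 / LN^2) * ((real k / LN - 1/2) / (sin (pi * (x - real k / LN)))^2))"
      by (rule sum.cong[OF refl]) (rule t)
    also have "c 0 * ((1 / LN^2) * (pi / sin (pi * ((y - real 0) / LN)))^2) = - (1/2) * (pi^2 / (LN^2 * (sin (pi * x))^2))"
      unfolding c_def using yx by (simp add: power_divide)
    finally show ?thesis unfolding S1_def by (simp add: sum_distrib_left)
  qed
  have ii: "- pi * cot (pi * y) / LN + (1 / LN) * (pi * cot (pi * x)) = pi * sin (pi * real N * x) / (LN * sin (pi * x) * sin (pi * y))"
  proof -
    have "pi * real N * x = pi * y - pi * x" unfolding y_def LN_def by (simp add: algebra_simps)
    then have sN: "sin (pi * real N * x) = sin (pi * y) * cos (pi * x) - cos (pi * y) * sin (pi * x)"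
      by (simp add: sin_diff)
    show ?thesis unfolding sN cot_def using sx sy LN0 by (simp add: field_simps)
  qed
  have iii: "vp N x = (sin (pi * y))^2 / LN^2 * S1 - sin (pi * real N * x) * sin (pi * y) / (pi * LN * sin (pi * x))"
    using vp_closed[OF nz] unfolding S1_def LN_def[symmetric] y_def by (simp add: mult_ac)
  define h where "h = pi^2 / (LN^2 * (sin (pi * x))^2)"
  have Wl_eq: "Wl = (x - 1/2) * (pi^2 / (sin (pi * y))^2) + (1/2) * h - (pi^2 / LN^2) * S1
       + pi * sin (pi * real N * x) / (LN * sin (pi * x) * sin (pi * y))"
    unfolding Wl_def LL i yx h_def using ii by (simp add: power_divide algebra_simps)
  have key: "pi^2 * (psi x - vp N x) = (sin (pi * y))^2 * (Wl - (1/2) * h)"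
    unfolding Wl_eq psix iii by (rule key_alg) (use sx sy LN0 in auto)
  have hb: "0 \<le> Wl" "Wl \<le> h" using Wl_bounds unfolding LL yx h_def by (simp_all add: power_divide)
  have "\<bar>Wl - (1/2) * h\<bar> \<le> (1/2) * h" unfolding abs_le_iff using hb by auto
  then have "(sin (pi * y))^2 * \<bar>Wl - (1/2) * h\<bar> \<le> (sin (pi * y))^2 * ((1/2) * h)"
    by (intro mult_left_mono) simp_all
  moreover have "pi^2 * \<bar>psi x - vp N x\<bar> = (sin (pi * y))^2 * \<bar>Wl - (1/2) * h\<bar>"
  proof -
    have "\<bar>pi^2 * (psi x - vp N x)\<bar> = \<bar>(sin (pi * y))^2 * (Wl - (1/2) * h)\<bar>" using key by simp
    then show ?thesis by (simp add: abs_mult)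
  qed
  ultimately have "pi^2 * \<bar>psi x - vp N x\<bar> \<le> (sin (pi * y))^2 * ((1/2) * h)" by linarith
  moreover have "(sin (pi * y))^2 * ((1/2) * h) = pi^2 * (fej N x / (2 * LN))"
  proof -
    have "(sin (pi * x))^2 * fej N x = (sin (pi * y))^2 / LN"
      using fej_closed[of x N] unfolding LN_def[symmetric] y_def by (simp add: mult_ac)
    then have "fej N x = (sin (pi * y))^2 / (LN * (sin (pi * x))^2)" using sx LN0 by (simp add: field_simps)
    then show ?thesis unfolding h_def using sx LN0 by (simp add: field_simps power2_eq_square)
  qed
  ultimately have "pi^2 * \<bar>psi x - vp N x\<bar> \<le> pi^2 * (fej N x / (2 * LN))" by simp
  then have "\<bar>psi x - vp N x\<bar> \<le> fej N x / (2 * LN)" by (rule mult_left_le_imp_le) simp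
  then show ?thesis unfolding LN_def .
qed

lemma isCont_fej: "isCont (fej N) t"
  unfolding fej_def by (intro continuous_intros)

lemma isCont_vp: "isCont (vp N) t"
  unfolding vp_def by (intro continuous_intros)

lemma vaaler_01:
  assumes x: "0 \<le> x" "x < 1"
  shows "\<bar>x - 1/2 - vp N x\<bar> \<le> fej N x / (2 * real (Suc N))"
proof -
  have Lpos: "real (Suc N) > 0" by simp
  define f where "f t = fej N t / (2 * real (Suc N)) - \<bar>t - 1/2 - vp N t\<bar>" for t
  have fc: "isCont f t" for t unfolding f_def by (intro continuous_intros isCont_fej isCont_vp) auto
  have good: "f t \<ge> 0" if "0 < t" "t < 1" "real (Suc N) * t \<notin> \<int>" for t
  proof -
    have "\<lfloor>t\<rfloor> = 0" using that by (simp add: floor_eq_iff)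
    then have pe: "psi t = t - 1/2" unfolding psi_def by simp
    have "\<bar>psi t - vp N t\<bar> \<le> fej N t / (2 * real (Suc N))" by (rule vaaler_open) (use that in auto)
    then have "\<bar>t - 1/2 - vp N t\<bar> \<le> fej N t / (2 * real (Suc N))" unfolding pe .
    then show ?thesis unfolding f_def by linarith
  qed
  show ?thesis
  proof (cases "real (Suc N) * x \<in> \<int>")
    case False
    have "x \<noteq> 0" using False by auto
    then have "f x \<ge> 0" using good[of x] x False by simp
    then show ?thesis unfolding f_def by simp
  next
    case True
    then obtain k where k: "real (Suc N) * x = of_int k" by (auto elim: Ints_cases)
    have "0 \<le> real (Suc N) * x" using x by simp
    then have k0: "0 \<le> k" using k by simp
    have h: "real (Suc N) * x < real (Suc N) * 1" by (rule mult_strict_left_mono) (use x in auto)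
    from h have kL: "of_int k < real (Suc N)" unfolding k by simp
    define s where "s m = (of_int k + 1 / (real m + 2)) / real (Suc N)" for m :: nat
    have sgood: "f (s m) \<ge> 0" for m
    proof (rule good)
      have p: "0 < 1 / (real m + 2)" "1 / (real m + 2) < 1" by (auto simp: field_simps)
      have "real_of_int k < real_of_int (int (Suc N))" using kL by simp
      then have "k < int (Suc N)" by (simp only: of_int_less_iff)
      then have "k + 1 \<le> int (Suc N)" by simp
      then have "real_of_int (k + 1) \<le> real_of_int (int (Suc N))" by (simp only: of_int_le_iff)
      then have k1: "of_int k + 1 \<le> real (Suc N)" by simp
      show "0 < s m" unfolding s_def using p k0 Lpos by (intro divide_pos_pos add_nonneg_pos) auto
      have "of_int k + 1 / (real m + 2) < real (Suc N)" using p k1 by linarith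
      then show "s m < 1" unfolding s_def using Lpos by (simp only: divide_less_eq_1_pos)
      have Ls: "real (Suc N) * s m = of_int k + 1 / (real m + 2)" unfolding s_def using Lpos by simp
      show "real (Suc N) * s m \<notin> \<int>" unfolding Ls using floor_interval_not_Ints[of k] p by simp
    qed
    have "(\<lambda>m. 1 / (real m + 2)) \<longlonglongrightarrow> 0" by real_asymp
    then have "s \<longlonglongrightarrow> (of_int k + 0) / real (Suc N)" unfolding s_def[abs_def] by (intro tendsto_intros) (use Lpos in auto)
    moreover have "(of_int k + 0) / real (Suc N) = x" using k Lpos by (simp add: field_simps)
    ultimately have sx: "s \<longlonglongrightarrow> x" by simp
    have "(\<lambda>m. f (s m)) \<longlonglongrightarrow> f x" using isCont_tendsto_compose[OF fc sx] .
    then have "f x \<ge> 0" using sgood by (intro LIMSEQ_le_const) auto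
    then show ?thesis unfolding f_def by simp
  qed
qed

lemma sin_shift_int: "sin (2 * pi * real h * (t - of_int m)) = sin (2 * pi * real h * t)"
proof -
  have e: "2 * pi * real h * (t - of_int m) = 2 * pi * real h * t - (2 * pi) * of_int (int h * m)" by (simp add: algebra_simps)
  have c: "cos ((2 * pi) * of_int (int h * m)) = 1" by (rule cos_int_2pin)
  have s: "sin ((2 * pi) * of_int (int h * m)) = 0" by (rule sin_int_2pin)
  show ?thesis unfolding e sin_diff c s by simp
qed

lemma cos_shift_int: "cos (2 * pi * real h * (t - of_int m)) = cos (2 * pi * real h * t)"
proof -
  have e: "2 * pi * real h * (t - of_int m) = 2 * pi * real h * t - (2 * pi) * of_int (int h * m)" by (simp add: algebra_simps)
  have c: "cos ((2 * pi) * of_int (int h * m)) = 1" by (rule cos_int_2pin)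
  have s: "sin ((2 * pi) * of_int (int h * m)) = 0" by (rule sin_int_2pin)
  show ?thesis unfolding e cos_diff c s by simp
qed

lemma vaaler:
  "\<bar>psi t - vp N t\<bar> \<le> fej N t / (2 * real (Suc N))"
proof -
  define x where "x = t - of_int \<lfloor>t\<rfloor>"
  have x: "0 \<le> x" "x < 1" unfolding x_def by linarith+
  have "psi t = x - 1/2" unfolding psi_def x_def by simp
  moreover have "vp N t = vp N x" unfolding vp_def x_def sin_shift_int ..
  moreover have "fej N t = fej N x" unfolding fej_def x_def cos_shift_int ..
  ultimately show ?thesis using vaaler_01[OF x, of N] by simp
qed

lemma e_cis: "e x = cis (2 * pi * x)"
  unfolding e_def cis_conv_exp by (simp add: mult_ac)

lemma norm_e [simp]: "cmod (e x) = 1" unfolding e_cis by simp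

lemma e_add: "e (a + b) = e a * e b"
  unfolding e_def by (simp add: algebra_simps exp_add[symmetric])

lemma e_zero [simp]: "e 0 = 1" unfolding e_def by simp

lemma e_pm_cos: "e x + e (- x) = 2 * complex_of_real (cos (2 * pi * x))"
  unfolding e_cis by (simp add: complex_eq_iff cis.sel)

lemma e_pm_sin: "e x - e (- x) = 2 * \<i> * complex_of_real (sin (2 * pi * x))"
  unfolding e_cis by (simp add: complex_eq_iff cis.sel)

lemma norm_cis_minus_1: "cmod (cis t - 1) \<le> \<bar>t\<bar>"
proof -
  have "(cmod (cis t - 1))^2 = (cos t - 1)^2 + (sin t)^2" by (simp add: cmod_power2)
  also have "\<dots> = 2 - 2 * cos t" by (simp add: power2_eq_square algebra_simps sin_squared_eq)
  also have "\<dots> = 4 * (sin (t/2))^2" using cos_double_sin[of "t/2"] by simp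
  also have "\<dots> \<le> 4 * (t/2)^2"
  proof -
    have "\<bar>sin (t/2)\<bar> \<le> \<bar>t/2\<bar>" by (rule abs_sin_x_le_abs_x)
    then have "(sin (t/2))^2 \<le> (t/2)^2" by (metis abs_le_square_iff)
    then show ?thesis by simp
  qed
  also have "\<dots> = \<bar>t\<bar>^2" by (simp add: power2_eq_square)
  finally show ?thesis by (rule power2_le_imp_le) simp
qed

lemma norm_e_minus_1: "cmod (e x - 1) \<le> 2 * pi * \<bar>x\<bar>"
  using norm_cis_minus_1[of "2 * pi * x"] unfolding e_cis by (simp add: abs_mult)

lemma norm_e_minus_1': "cmod (e x - 1) \<le> 2"
proof -
  have "cmod (e x - 1) \<le> cmod (e x) + cmod 1" by (rule norm_triangle_ineq4)
  then show ?thesis by simp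
qed

lemma sym_sum: "(\<Sum>h\<in>{- int N..int N}. f h) = f 0 + (\<Sum>h=1..N. f (int h) + f (- int h))"
proof (induction N)
  case 0 then show ?case by simp
next
  case (Suc N)
  have e: "{- int (Suc N)..int (Suc N)} = insert (int (Suc N)) (insert (- int (Suc N)) {- int N..int N})" by auto
  show ?case unfolding e using Suc by (simp add: algebra_simps)
qed

definition cc :: "nat \<Rightarrow> int \<Rightarrow> complex" where
  "cc N h = \<i> * of_int (sgn h) * of_real (gam N (nat \<bar>h\<bar>))"

lemma cc0 [simp]: "cc N 0 = 0" unfolding cc_def by simp

definition fw :: "nat \<Rightarrow> int \<Rightarrow> real" where
  "fw N h = 1 - of_int \<bar>h\<bar> / real (Suc N)"

lemma fejC: "complex_of_real (fej N t) = (\<Sum>h\<in>{- int N..int N}. of_real (fw N h) * e (of_int h * t))"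
proof -
  have "(\<Sum>h\<in>{- int N..int N}. of_real (fw N h) * e (of_int h * t))
      = 1 + (\<Sum>h=1..N. of_real (fw N (int h)) * (e (real h * t) + e (- (real h * t))))"
    unfolding sym_sum by (simp add: fw_def algebra_simps)
  also have "\<dots> = 1 + (\<Sum>h=1..N. of_real (2 * ((1 - real h / real (Suc N)) * cos (2*pi*real h*t))))"
    unfolding e_pm_cos fw_def by (intro arg_cong2[where f="(+)"] sum.cong refl) (simp add: mult_ac)
  also have "\<dots> = complex_of_real (fej N t)"
    unfolding fej_def by (simp add: sum_distrib_left)
  finally show ?thesis ..
qed

lemma vpC: "complex_of_real (vp N t) = (\<Sum>h\<in>{- int N..int N}. cc N h * e (of_int h * t))"
proof -
  have "(\<Sum>h\<in>{- int N..int N}. cc N h * e (of_int h * t))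
      = (\<Sum>h=1..N. \<i> * of_real (gam N h) * (e (real h * t) - e (- (real h * t))))"
  proof -
    have "(\<Sum>h\<in>{- int N..int N}. cc N h * e (of_int h * t))
      = (\<Sum>h=1..N. cc N (int h) * e (real h * t) + cc N (- int h) * e (- (real h * t)))"
      unfolding sym_sum by simp
    also have "\<dots> = (\<Sum>h=1..N. \<i> * of_real (gam N h) * (e (real h * t) - e (- (real h * t))))"
      by (intro sum.cong refl) (auto simp: cc_def algebra_simps)
    finally show ?thesis .
  qed
  also have "\<dots> = (\<Sum>h=1..N. of_real (- 2 * (gam N h * sin (2*pi*real h*t))))"
    unfolding e_pm_sin by (intro sum.cong refl) (simp add: mult_ac)
  also have "\<dots> = complex_of_real (vp N t)"
    unfolding vp_def by (simp add: sum_distrib_left)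
  finally show ?thesis ..
qed

lemma cc_bound:
  assumes "h \<noteq> 0" "\<bar>h\<bar> \<le> int N"
  shows "cmod (cc N h) \<le> 1 / (2 * pi * of_int \<bar>h\<bar>)"
proof -
  have h1: "1 \<le> nat \<bar>h\<bar>" "nat \<bar>h\<bar> \<le> N" using assms by auto
  have sg0: "\<bar>sgn h\<bar> = 1" using assms by (cases "h > 0") auto
  have sg: "\<bar>real_of_int (sgn h)\<bar> = 1"
  proof -
    have "\<bar>real_of_int (sgn h)\<bar> = real_of_int \<bar>sgn h\<bar>" by (simp only: of_int_abs)
    then show ?thesis using sg0 by simp
  qed
  have "cmod (cc N h) = \<bar>gam N (nat \<bar>h\<bar>)\<bar>" unfolding cc_def norm_mult norm_of_int norm_of_real
    using sg by simp
  also have "\<dots> = gam N (nat \<bar>h\<bar>)" using gam_bounds(1)[OF h1] by simp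
  also have "\<dots> \<le> 1 / (2 * pi * real (nat \<bar>h\<bar>))" using gam_bounds(2)[OF h1] .
  finally show ?thesis by simp
qed

lemma e_factor:
  assumes "\<alpha> \<noteq> 0"
  shows "e (of_int h * ((\<beta> - real m) / \<alpha> + s)) = e (of_int h * (\<beta> / \<alpha> + s)) * e (- real m * (of_int h / \<alpha>))"
proof -
  have eq: "of_int h * ((\<beta> - real m) / \<alpha> + s) = of_int h * (\<beta> / \<alpha> + s) + (- real m * (of_int h / \<alpha>))"
    using assms by (simp add: field_simps)
  show ?thesis unfolding eq e_add ..
qed

lemma fw_bound: "\<bar>h\<bar> \<le> int N \<Longrightarrow> \<bar>fw N h\<bar> \<le> 1"
  unfolding fw_def by (auto simp: field_simps abs_le_iff)

lemma FS:
  assumes fin: "finite Ms" and a: "\<alpha> \<noteq> 0"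
  shows "(\<Sum>m\<in>Ms. fej N ((\<beta> - real m) / \<alpha> + s)) \<le>
         (\<Sum>h\<in>{- int N..int N}. cmod (\<Sum>m\<in>Ms. e (- real m * (of_int h / \<alpha>))))"
proof -
  have "complex_of_real (\<Sum>m\<in>Ms. fej N ((\<beta> - real m) / \<alpha> + s))
      = (\<Sum>m\<in>Ms. \<Sum>h\<in>{- int N..int N}. of_real (fw N h) * e (of_int h * ((\<beta> - real m) / \<alpha> + s)))"
    by (simp add: fejC)
  also have "\<dots> = (\<Sum>h\<in>{- int N..int N}. of_real (fw N h) * e (of_int h * (\<beta> / \<alpha> + s)) * (\<Sum>m\<in>Ms. e (- real m * (of_int h / \<alpha>))))"
    by (subst sum.swap) (simp add: e_factor[OF a] sum_distrib_left mult_ac)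
  finally have eq: "complex_of_real (\<Sum>m\<in>Ms. fej N ((\<beta> - real m) / \<alpha> + s)) = \<dots>" .
  have "(\<Sum>m\<in>Ms. fej N ((\<beta> - real m) / \<alpha> + s)) \<le> cmod (complex_of_real (\<Sum>m\<in>Ms. fej N ((\<beta> - real m) / \<alpha> + s)))"
    by (metis norm_of_real abs_ge_self)
  also have "\<dots> \<le> (\<Sum>h\<in>{- int N..int N}. cmod (of_real (fw N h) * e (of_int h * (\<beta> / \<alpha> + s)) * (\<Sum>m\<in>Ms. e (- real m * (of_int h / \<alpha>)))))"
    unfolding eq by (rule norm_sum)
  also have "\<dots> \<le> (\<Sum>h\<in>{- int N..int N}. cmod (\<Sum>m\<in>Ms. e (- real m * (of_int h / \<alpha>))))"
  proof (rule sum_mono)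
    fix h assume h: "h \<in> {- int N..int N}"
    have "\<bar>fw N h\<bar> \<le> 1" using h by (intro fw_bound) auto
    then show "cmod (of_real (fw N h) * e (of_int h * (\<beta> / \<alpha> + s)) * (\<Sum>m\<in>Ms. e (- real m * (of_int h / \<alpha>))))
        \<le> cmod (\<Sum>m\<in>Ms. e (- real m * (of_int h / \<alpha>)))"
      unfolding norm_mult by (simp add: mult_left_le_one_le)
  qed
  finally show ?thesis .
qed

lemma VPD:
  assumes fin: "finite Ms" and a: "\<alpha> \<noteq> 0"
  shows "cmod (\<Sum>m\<in>Ms. \<phi> m * complex_of_real (vp N ((\<beta> - real m) / \<alpha> - 1 / \<alpha>) - vp N ((\<beta> - real m) / \<alpha>)))
       \<le> (\<Sum>h\<in>{- int N..int N}. cmod (cc N h) * cmod (e (- (of_int h / \<alpha>)) - 1) * cmod (\<Sum>m\<in>Ms. \<phi> m * e (- real m * (of_int h / \<alpha>))))"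
proof -
  have d: "complex_of_real (vp N ((\<beta> - real m) / \<alpha> - 1 / \<alpha>) - vp N ((\<beta> - real m) / \<alpha>))
     = (\<Sum>h\<in>{- int N..int N}. cc N h * (e (- (of_int h / \<alpha>)) - 1) * e (of_int h * (\<beta> / \<alpha>)) * e (- real m * (of_int h / \<alpha>)))" for m
  proof -
    have e1: "e (of_int h * ((\<beta> - real m) / \<alpha> - 1 / \<alpha>)) = e (- (of_int h / \<alpha>)) * e (of_int h * (\<beta> / \<alpha>)) * e (- real m * (of_int h / \<alpha>))" for h
      using e_factor[OF a, of h \<beta> m "- 1 / \<alpha>"] e_add[of "- (of_int h / \<alpha>)" "of_int h * (\<beta> / \<alpha>)"]
      by (simp add: algebra_simps)
    have e2: "e (of_int h * ((\<beta> - real m) / \<alpha>)) = e (of_int h * (\<beta> / \<alpha>)) * e (- real m * (of_int h / \<alpha>))" for h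
      using e_factor[OF a, of h \<beta> m 0] by simp
    show ?thesis unfolding of_real_diff vpC e1 e2 sum_subtractf[symmetric]
      by (intro sum.cong refl) (simp add: algebra_simps)
  qed
  have "(\<Sum>m\<in>Ms. \<phi> m * complex_of_real (vp N ((\<beta> - real m) / \<alpha> - 1 / \<alpha>) - vp N ((\<beta> - real m) / \<alpha>)))
      = (\<Sum>h\<in>{- int N..int N}. cc N h * (e (- (of_int h / \<alpha>)) - 1) * e (of_int h * (\<beta> / \<alpha>)) * (\<Sum>m\<in>Ms. \<phi> m * e (- real m * (of_int h / \<alpha>))))"
    unfolding d sum_distrib_left by (subst sum.swap) (simp add: mult_ac)
  then have "cmod (\<Sum>m\<in>Ms. \<phi> m * complex_of_real (vp N ((\<beta> - real m) / \<alpha> - 1 / \<alpha>) - vp N ((\<beta> - real m) / \<alpha>)))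
      \<le> (\<Sum>h\<in>{- int N..int N}. cmod (cc N h * (e (- (of_int h / \<alpha>)) - 1) * e (of_int h * (\<beta> / \<alpha>)) * (\<Sum>m\<in>Ms. \<phi> m * e (- real m * (of_int h / \<alpha>)))))"
    by (simp add: norm_sum)
  also have "\<dots> = (\<Sum>h\<in>{- int N..int N}. cmod (cc N h) * cmod (e (- (of_int h / \<alpha>)) - 1) * cmod (\<Sum>m\<in>Ms. \<phi> m * e (- real m * (of_int h / \<alpha>))))"
    by (simp add: norm_mult)
  finally show ?thesis .
qed

lemma coef_bound:
  assumes h: "h \<noteq> 0" "\<bar>h\<bar> \<le> int N" and a: "\<alpha> \<ge> 1"
  shows "cmod (cc N h) * cmod (e (- (of_int h / \<alpha>)) - 1) \<le> min (1 / \<alpha>) (1 / real_of_int \<bar>h\<bar>)"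
proof -
  have hp: "real_of_int \<bar>h\<bar> > 0" using h by simp
  have c: "cmod (cc N h) \<le> 1 / (2 * pi * of_int \<bar>h\<bar>)" by (rule cc_bound[OF h])
  have e1: "cmod (e (- (of_int h / \<alpha>)) - 1) \<le> 2 * pi * (of_int \<bar>h\<bar> / \<alpha>)"
    using norm_e_minus_1[of "- (of_int h / \<alpha>)"] a by (simp add: abs_div)
  have e2: "cmod (e (- (of_int h / \<alpha>)) - 1) \<le> 2" by (rule norm_e_minus_1')
  have "cmod (cc N h) * cmod (e (- (of_int h / \<alpha>)) - 1) \<le> 1 / (2 * pi * of_int \<bar>h\<bar>) * (2 * pi * (of_int \<bar>h\<bar> / \<alpha>))"
    by (rule mult_mono[OF c e1]) auto
  also have "\<dots> = 1 / \<alpha>" using hp by (simp add: field_simps)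
  finally have b1: "cmod (cc N h) * cmod (e (- (of_int h / \<alpha>)) - 1) \<le> 1 / \<alpha>" .
  have "cmod (cc N h) * cmod (e (- (of_int h / \<alpha>)) - 1) \<le> 1 / (2 * pi * of_int \<bar>h\<bar>) * 2"
    by (rule mult_mono[OF c e2]) auto
  also have "\<dots> = 1 / (pi * of_int \<bar>h\<bar>)" by simp
  also have "\<dots> \<le> 1 / of_int \<bar>h\<bar>"
  proof -
    have "1 * of_int \<bar>h\<bar> \<le> pi * of_int \<bar>h\<bar>" using hp pi_gt3 by (intro mult_right_mono) auto
    then show ?thesis using hp by (intro divide_left_mono) auto
  qed
  finally show ?thesis using b1 by simp
qed

lemma chi01:
  assumes a: "(\<alpha>::real) \<ge> 1"
  shows "0 \<le> \<lfloor>x\<rfloor> - \<lfloor>x - 1/\<alpha>\<rfloor>" "\<lfloor>x\<rfloor> - \<lfloor>x - 1/\<alpha>\<rfloor> \<le> 1"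
proof -
  have p: "0 < 1/\<alpha>" "1/\<alpha> \<le> 1" using a by auto
  have "\<lfloor>x - 1/\<alpha>\<rfloor> \<le> \<lfloor>x\<rfloor>" using p by (intro floor_mono) simp
  then show "0 \<le> \<lfloor>x\<rfloor> - \<lfloor>x - 1/\<alpha>\<rfloor>" by simp
  have "\<lfloor>x - 1\<rfloor> \<le> \<lfloor>x - 1/\<alpha>\<rfloor>" using p by (intro floor_mono) simp
  then show "\<lfloor>x\<rfloor> - \<lfloor>x - 1/\<alpha>\<rfloor> \<le> 1" by simp
qed

lemma count_bound:
  fixes \<phi> :: "nat \<Rightarrow> complex" and \<alpha> \<beta> K :: real
  assumes \<phi>: "\<forall>m. cmod (\<phi> m) \<le> 1" and a: "\<alpha> \<ge> 1" and b: "\<beta> \<ge> 0" and K: "K \<ge> 0"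
  shows "cmod ((\<Sum>n\<in>{n::nat. 0 < n \<and> real n \<le> K}. \<phi> (nat \<lfloor>real n * \<alpha> + \<beta>\<rfloor>))
     - (\<Sum>m\<in>{m::nat. \<beta> < real m \<and> real m \<le> \<beta> + K * \<alpha>}. \<phi> m * of_int (\<lfloor>(\<beta> - real m) / \<alpha>\<rfloor> - \<lfloor>(\<beta> - real m) / \<alpha> - 1/\<alpha>\<rfloor>))) \<le> 1"
proof -
  define Ms where "Ms = {m::nat. \<beta> < real m \<and> real m \<le> \<beta> + K * \<alpha>}"
  define Ns where "Ns = {n::nat. 0 < n \<and> real n \<le> K}"
  define chi where "chi m = \<lfloor>(\<beta> - real m) / \<alpha>\<rfloor> - \<lfloor>(\<beta> - real m) / \<alpha> - 1/\<alpha>\<rfloor>" for m :: nat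
  define f where "f n = nat \<lfloor>real n * \<alpha> + \<beta>\<rfloor>" for n :: nat
  have a0: "\<alpha> > 0" using a by simp
  have finM: "finite Ms"
  proof (rule finite_subset)
    show "Ms \<subseteq> {..nat \<lceil>\<beta> + K * \<alpha>\<rceil>}" unfolding Ms_def by (auto simp: le_nat_iff le_ceiling_iff)
  qed simp
  have finN: "finite Ns"
  proof (rule finite_subset)
    show "Ns \<subseteq> {..nat \<lceil>K\<rceil>}" unfolding Ns_def by (auto simp: le_nat_iff le_ceiling_iff)
  qed simp
  have chi01': "chi m = 0 \<or> chi m = 1" for m using chi01[OF a, of "(\<beta> - real m) / \<alpha>"] unfolding chi_def by linarith
  have A1: "f n \<in> Ms \<and> chi (f n) = 1" if n: "n \<in> Ns" for n
  proof -
    define v where "v = real n * \<alpha> + \<beta>"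
    have n1: "real n \<ge> 1" "real n \<le> K" using n unfolding Ns_def by auto
    have "1 * \<alpha> \<le> real n * \<alpha>" using n1 a0 by (intro mult_right_mono) auto
    then have v1: "v \<ge> \<alpha> + \<beta>" unfolding v_def by simp
    have "real n * \<alpha> \<le> K * \<alpha>" using n1 a0 by (intro mult_right_mono) auto
    then have vK: "v \<le> \<beta> + K * \<alpha>" unfolding v_def by simp
    have z1: "\<lfloor>v\<rfloor> \<ge> 1" using v1 a b by (simp add: le_floor_iff)
    have fz: "real (f n) = real_of_int \<lfloor>v\<rfloor>" unfolding f_def v_def[symmetric] using z1 by simp
    have fl: "v - 1 < real_of_int \<lfloor>v\<rfloor>" "real_of_int \<lfloor>v\<rfloor> \<le> v" by linarith+
    have i1: "\<beta> < real (f n)" using fz fl(1) v1 a by linarith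
    have i2: "real (f n) \<le> \<beta> + K * \<alpha>" using fz fl(2) vK by linarith
    have inM: "f n \<in> Ms" unfolding Ms_def using i1 i2 by simp
    have c1: "\<lfloor>(\<beta> - real (f n)) / \<alpha>\<rfloor> \<ge> - int n"
    proof -
      have "- real n * \<alpha> \<le> \<beta> - real (f n)" using fz fl(2) v_def by linarith
      then have "- real n \<le> (\<beta> - real (f n)) / \<alpha>" using a0 by (simp add: field_simps)
      then show ?thesis by (simp add: le_floor_iff)
    qed
    have c2: "\<lfloor>(\<beta> - real (f n)) / \<alpha> - 1/\<alpha>\<rfloor> < - int n"
    proof -
      have "\<beta> - real (f n) - 1 < - real n * \<alpha>" using fz fl(1) v_def by linarith
      then have "(\<beta> - real (f n) - 1) / \<alpha> < - real n" using a0 by (simp add: divide_less_eq)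
      moreover have "(\<beta> - real (f n)) / \<alpha> - 1/\<alpha> = (\<beta> - real (f n) - 1) / \<alpha>" by (simp add: diff_divide_distrib)
      ultimately have "(\<beta> - real (f n)) / \<alpha> - 1/\<alpha> < - real n" by simp
      then show ?thesis by (simp add: floor_less_iff)
    qed
    have "chi (f n) \<ge> 1" unfolding chi_def using c1 c2 by linarith
    then show ?thesis using inM chi01'[of "f n"] by auto
  qed
  have A2: "inj_on f Ns"
  proof (rule inj_onI)
    fix n n' assume n: "n \<in> Ns" "n' \<in> Ns" and eq: "f n = f n'"
    have z1: "\<lfloor>real n * \<alpha> + \<beta>\<rfloor> \<ge> 0" "\<lfloor>real n' * \<alpha> + \<beta>\<rfloor> \<ge> 0" using n a b unfolding Ns_def by auto
    have fe: "\<lfloor>real n * \<alpha> + \<beta>\<rfloor> = \<lfloor>real n' * \<alpha> + \<beta>\<rfloor>"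
      using z1 eq unfolding f_def by (metis eq_nat_nat_iff)
    have d: "\<bar>(real n * \<alpha> + \<beta>) - (real n' * \<alpha> + \<beta>)\<bar> < 1"
      using fe by linarith
    show "n = n'"
    proof (rule ccontr)
      assume "n \<noteq> n'"
      then have "\<bar>real n - real n'\<bar> \<ge> 1" by linarith
      then have "\<bar>real n - real n'\<bar> * \<alpha> \<ge> 1 * 1" using a by (intro mult_mono) auto
      moreover have "\<bar>(real n * \<alpha> + \<beta>) - (real n' * \<alpha> + \<beta>)\<bar> = \<bar>real n - real n'\<bar> * \<alpha>"
      proof -
        have "(real n * \<alpha> + \<beta>) - (real n' * \<alpha> + \<beta>) = (real n - real n') * \<alpha>" by (simp add: algebra_simps)
        then show ?thesis using a0 by (simp add: abs_mult)
      qed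
      ultimately show False using d by simp
    qed
  qed
  define Mh where "Mh = {m\<in>Ms. chi m = 1}"
  have sub: "f ` Ns \<subseteq> Mh" unfolding Mh_def using A1 by auto
  define D where "D = Mh - f ` Ns"
  have finMh: "finite Mh" unfolding Mh_def using finM by simp
  have finD: "finite D" unfolding D_def using finMh by simp
  have A3: "\<exists>n0::int. K < of_int n0 \<and> of_int n0 < K + 1 \<and> \<lfloor>of_int n0 * \<alpha> + \<beta>\<rfloor> = int m" if m: "m \<in> D" for m
  proof -
    have mM: "m \<in> Ms" "chi m = 1" "m \<notin> f ` Ns" using m unfolding D_def Mh_def by auto
    define xm where "xm = (\<beta> - real m) / \<alpha>"
    define p where "p = \<lfloor>xm\<rfloor>"
    have pf: "\<lfloor>xm - 1/\<alpha>\<rfloor> = p - 1" using mM(2) unfolding chi_def xm_def p_def by simp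
    have p1: "xm - 1/\<alpha> < of_int p" using pf by (simp add: floor_eq_iff)
    have p2: "of_int p \<le> xm" unfolding p_def by simp
    define n0 where "n0 = - p"
    have u1: "real m \<le> of_int n0 * \<alpha> + \<beta>"
    proof -
      have "of_int p * \<alpha> \<le> \<beta> - real m" using p2 a0 unfolding xm_def by (simp add: field_simps)
      then show ?thesis unfolding n0_def by simp
    qed
    have u2: "of_int n0 * \<alpha> + \<beta> < real m + 1"
    proof -
      have "(\<beta> - real m - 1) / \<alpha> < of_int p" using p1 unfolding xm_def by (simp add: diff_divide_distrib)
      then have "\<beta> - real m - 1 < of_int p * \<alpha>" using a0 by (simp add: divide_less_eq)
      then show ?thesis unfolding n0_def by simp
    qed
    have fl: "\<lfloor>of_int n0 * \<alpha> + \<beta>\<rfloor> = int m" using u1 u2 by (simp add: floor_eq_iff)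
    have mb: "\<beta> < real m" "real m \<le> \<beta> + K * \<alpha>" using mM(1) unfolding Ms_def by auto
    have "0 < of_int n0 * \<alpha>" using u1 mb by simp
    then have n0p: "0 < n0" using a0 by (simp add: zero_less_mult_iff)
    have Kn: "K < of_int n0"
    proof (rule ccontr)
      assume "\<not> K < of_int n0"
      then have "real (nat n0) \<le> K" using n0p by simp
      then have "nat n0 \<in> Ns" unfolding Ns_def using n0p by simp
      moreover have "f (nat n0) = m" unfolding f_def using n0p fl by simp
      ultimately show False using mM(3) by auto
    qed
    have nK: "of_int n0 < K + 1"
    proof (rule ccontr)
      assume "\<not> of_int n0 < K + 1"
      then have "of_int n0 - K \<ge> 1" by simp
      then have "(of_int n0 - K) * \<alpha> \<ge> 1 * 1" using a by (intro mult_mono) auto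
      then show False using u2 mb by (simp add: algebra_simps)
    qed
    show ?thesis using Kn nK fl by blast
  qed
  have cardD: "card D \<le> 1"
  proof -
    have "\<forall>a\<in>D. \<forall>b\<in>D. a = b"
    proof (intro ballI)
      fix a1 b1 assume ab: "a1 \<in> D" "b1 \<in> D"
      obtain n1 where n1: "K < of_int n1" "of_int n1 < K + 1" "\<lfloor>of_int n1 * \<alpha> + \<beta>\<rfloor> = int a1" using A3[OF ab(1)] by blast
      obtain n2 where n2: "K < of_int n2" "of_int n2 < K + 1" "\<lfloor>of_int n2 * \<alpha> + \<beta>\<rfloor> = int b1" using A3[OF ab(2)] by blast
      have "n1 = n2"
      proof (rule ccontr)
        assume "n1 \<noteq> n2"
        then have "n1 + 1 \<le> n2 \<or> n2 + 1 \<le> n1" by linarith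
        then have "real_of_int n1 + 1 \<le> of_int n2 \<or> real_of_int n2 + 1 \<le> of_int n1"
          by (metis of_int_1 of_int_add of_int_le_iff)
        then show False using n1 n2 by linarith
      qed
      then show "a1 = b1" using n1(3) n2(3) by simp
    qed
    then show ?thesis using card_le_Suc0_iff_eq[OF finD] by simp
  qed
  have s1: "(\<Sum>m\<in>Ms. \<phi> m * of_int (chi m)) = (\<Sum>m\<in>Mh. \<phi> m)"
  proof -
    have "(\<Sum>m\<in>Ms. \<phi> m * of_int (chi m)) = (\<Sum>m\<in>Ms. if chi m = 1 then \<phi> m else 0)"
      using chi01' by (intro sum.cong refl) (metis mult_1_right mult_zero_right of_int_0 of_int_1)
    also have "\<dots> = (\<Sum>m\<in>Mh. \<phi> m)" unfolding Mh_def using finM by (simp add: sum.inter_filter)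
    finally show ?thesis .
  qed
  have s2: "(\<Sum>n\<in>Ns. \<phi> (f n)) = (\<Sum>m\<in>f ` Ns. \<phi> m)" using sum.reindex[OF A2, of \<phi>] by simp
  have s3: "(\<Sum>m\<in>Mh. \<phi> m) = (\<Sum>m\<in>D. \<phi> m) + (\<Sum>m\<in>f ` Ns. \<phi> m)"
    unfolding D_def using sum.subset_diff[OF sub finMh] .
  have "cmod ((\<Sum>n\<in>Ns. \<phi> (f n)) - (\<Sum>m\<in>Ms. \<phi> m * of_int (chi m))) = cmod (\<Sum>m\<in>D. \<phi> m)"
    unfolding s1 s2 s3 by (simp add: norm_minus_commute)
  also have "\<dots> \<le> (\<Sum>m\<in>D. cmod (\<phi> m))" by (rule norm_sum)
  also have "\<dots> \<le> (\<Sum>m\<in>D. 1)" using \<phi> by (intro sum_mono) auto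
  also have "\<dots> \<le> 1" using cardD by simp
  finally show ?thesis unfolding Ns_def Ms_def chi_def f_def .
qed

lemma psi_chi: "real_of_int (\<lfloor>x\<rfloor> - \<lfloor>x - 1/\<alpha>\<rfloor>) - 1/\<alpha> = psi (x - 1/\<alpha>) - psi x"
  unfolding psi_def by simp

lemma main_ineq:
  fixes \<phi> :: "nat \<Rightarrow> complex" and \<alpha> \<beta> K H :: real
  assumes \<phi>: "\<forall>m. cmod (\<phi> m) \<le> 1" and a: "\<alpha> \<ge> 1" and b: "\<beta> \<ge> 0" and K: "K \<ge> 0" and H: "H \<ge> 1"
  shows "cmod ((\<Sum>n\<in>{n::nat. 0 < n \<and> real n \<le> K}. \<phi> (nat \<lfloor>real n * \<alpha> + \<beta>\<rfloor>))
          - (1 / complex_of_real \<alpha>) * (\<Sum>m\<in>{m::nat. \<beta> < real m \<and> real m \<le> \<beta> + K * \<alpha>}. \<phi> m))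
    \<le> (\<Sum>h\<in>{h::int. 1 \<le> \<bar>h\<bar> \<and> real_of_int \<bar>h\<bar> \<le> H}.
          min (1 / \<alpha>) (1 / real_of_int \<bar>h\<bar>) *
          cmod (\<Sum>m\<in>{m::nat. \<beta> < real m \<and> real m \<le> \<beta> + K * \<alpha>}.
                  \<phi> m * e (- real m * (real_of_int h / \<alpha>))))
      + (1 / H) * (\<Sum>h\<in>{h::int. 0 \<le> \<bar>h\<bar> \<and> real_of_int \<bar>h\<bar> \<le> H}.
          cmod (\<Sum>m\<in>{m::nat. \<beta> < real m \<and> real m \<le> \<beta> + K * \<alpha>}.
                  e (- real m * (real_of_int h / \<alpha>))))
      + 1"
proof -
  define Ms where "Ms = {m::nat. \<beta> < real m \<and> real m \<le> \<beta> + K * \<alpha>}"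
  define Ns where "Ns = {n::nat. 0 < n \<and> real n \<le> K}"
  define N where "N = nat \<lfloor>H\<rfloor>"
  define L where "L = real (Suc N)"
  have a0: "\<alpha> > 0" using a by simp
  have Hf: "\<lfloor>H\<rfloor> = int N" unfolding N_def using H by simp
  have HL: "H < L" unfolding L_def using Hf by linarith
  have H0: "H > 0" using H by simp
  have finM: "finite Ms"
  proof (rule finite_subset)
    show "Ms \<subseteq> {..nat \<lceil>\<beta> + K * \<alpha>\<rceil>}" unfolding Ms_def by (auto simp: le_nat_iff le_ceiling_iff)
  qed simp
  have hs: "real_of_int \<bar>h\<bar> \<le> H \<longleftrightarrow> \<bar>h\<bar> \<le> int N" for h :: int
  proof -
    have "(real_of_int \<bar>h\<bar> \<le> H) = (\<bar>h\<bar> \<le> \<lfloor>H\<rfloor>)" by (rule le_floor_iff[symmetric])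
    then show ?thesis unfolding Hf .
  qed
  have H1: "{h::int. 1 \<le> \<bar>h\<bar> \<and> real_of_int \<bar>h\<bar> \<le> H} = {- int N..int N} - {0}"
    unfolding hs by auto
  have H0s: "{h::int. 0 \<le> \<bar>h\<bar> \<and> real_of_int \<bar>h\<bar> \<le> H} = {- int N..int N}"
    unfolding hs by auto
  define S where "S h = cmod (\<Sum>m\<in>Ms. e (- real m * (real_of_int h / \<alpha>)))" for h :: int
  define T where "T h = cmod (\<Sum>m\<in>Ms. \<phi> m * e (- real m * (real_of_int h / \<alpha>)))" for h :: int
  define xm where "xm m = (\<beta> - real m) / \<alpha>" for m :: nat
  define R where "R t = psi t - vp N t" for t
  define X where "X = (\<Sum>n\<in>Ns. \<phi> (nat \<lfloor>real n * \<alpha> + \<beta>\<rfloor>))"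
  define Y where "Y = (\<Sum>m\<in>Ms. \<phi> m)"
  define Z where "Z = (\<Sum>m\<in>Ms. \<phi> m * of_int (\<lfloor>xm m\<rfloor> - \<lfloor>xm m - 1/\<alpha>\<rfloor>))"
  have cA: "cmod (X - Z) \<le> 1"
    using count_bound[OF \<phi> a b K] unfolding X_def Z_def Ns_def Ms_def xm_def .
  have ZY: "Z - (1 / complex_of_real \<alpha>) * Y
      = (\<Sum>m\<in>Ms. \<phi> m * complex_of_real (vp N (xm m - 1/\<alpha>) - vp N (xm m)))
      + (\<Sum>m\<in>Ms. \<phi> m * complex_of_real (R (xm m - 1/\<alpha>) - R (xm m)))"
  proof -
    have "Z - (1 / complex_of_real \<alpha>) * Y = (\<Sum>m\<in>Ms. \<phi> m * complex_of_real (real_of_int (\<lfloor>xm m\<rfloor> - \<lfloor>xm m - 1/\<alpha>\<rfloor>) - 1/\<alpha>))"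
    proof -
      have y: "(1 / complex_of_real \<alpha>) * Y = (\<Sum>m\<in>Ms. \<phi> m * complex_of_real (1/\<alpha>))"
        unfolding Y_def by (simp add: sum_divide_distrib)
      have "Z - (1 / complex_of_real \<alpha>) * Y = (\<Sum>m\<in>Ms. \<phi> m * of_int (\<lfloor>xm m\<rfloor> - \<lfloor>xm m - 1/\<alpha>\<rfloor>) - \<phi> m * complex_of_real (1/\<alpha>))"
        unfolding y Z_def by (simp only: sum_subtractf)
      also have "\<dots> = (\<Sum>m\<in>Ms. \<phi> m * complex_of_real (real_of_int (\<lfloor>xm m\<rfloor> - \<lfloor>xm m - 1/\<alpha>\<rfloor>) - 1/\<alpha>))"
        by (intro sum.cong refl) (simp add: algebra_simps)
      finally show ?thesis .
    qed
    also have "\<dots> = (\<Sum>m\<in>Ms. \<phi> m * complex_of_real (vp N (xm m - 1/\<alpha>) - vp N (xm m))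
                     + \<phi> m * complex_of_real (R (xm m - 1/\<alpha>) - R (xm m)))"
      unfolding psi_chi R_def by (intro sum.cong refl) (simp add: algebra_simps)
    finally show ?thesis by (simp add: sum.distrib)
  qed
  have V: "cmod (\<Sum>m\<in>Ms. \<phi> m * complex_of_real (vp N (xm m - 1/\<alpha>) - vp N (xm m)))
      \<le> (\<Sum>h\<in>{- int N..int N} - {0}. min (1 / \<alpha>) (1 / real_of_int \<bar>h\<bar>) * T h)"
  proof -
    have "cmod (\<Sum>m\<in>Ms. \<phi> m * complex_of_real (vp N (xm m - 1/\<alpha>) - vp N (xm m)))
      \<le> (\<Sum>h\<in>{- int N..int N}. cmod (cc N h) * cmod (e (- (of_int h / \<alpha>)) - 1) * T h)"
      using VPD[OF finM, of \<alpha> \<phi> N \<beta>] a0 unfolding xm_def T_def by simp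
    also have "\<dots> = (\<Sum>h\<in>{- int N..int N} - {0}. cmod (cc N h) * cmod (e (- (of_int h / \<alpha>)) - 1) * T h)"
      by (subst sum.remove[of _ 0]) auto
    also have "\<dots> \<le> (\<Sum>h\<in>{- int N..int N} - {0}. min (1 / \<alpha>) (1 / real_of_int \<bar>h\<bar>) * T h)"
    proof (rule sum_mono)
      fix h assume h: "h \<in> {- int N..int N} - {0}"
      have "cmod (cc N h) * cmod (e (- (of_int h / \<alpha>)) - 1) \<le> min (1 / \<alpha>) (1 / real_of_int \<bar>h\<bar>)"
        using h by (intro coef_bound a) auto
      then show "cmod (cc N h) * cmod (e (- (of_int h / \<alpha>)) - 1) * T h \<le> min (1 / \<alpha>) (1 / real_of_int \<bar>h\<bar>) * T h"
        by (rule mult_right_mono) (simp add: T_def)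
    qed
    finally show ?thesis .
  qed
  have Rb: "cmod (\<Sum>m\<in>Ms. \<phi> m * complex_of_real (R (xm m - 1/\<alpha>) - R (xm m)))
      \<le> (1 / H) * (\<Sum>h\<in>{- int N..int N}. S h)"
  proof -
    have RR: "\<bar>R t\<bar> \<le> fej N t / (2 * L)" for t unfolding R_def L_def by (rule vaaler)
    have "cmod (\<Sum>m\<in>Ms. \<phi> m * complex_of_real (R (xm m - 1/\<alpha>) - R (xm m)))
        \<le> (\<Sum>m\<in>Ms. cmod (\<phi> m * complex_of_real (R (xm m - 1/\<alpha>) - R (xm m))))" by (rule norm_sum)
    also have "\<dots> \<le> (\<Sum>m\<in>Ms. fej N (xm m + (- 1/\<alpha>)) / (2 * L) + fej N (xm m + 0) / (2 * L))"
    proof (rule sum_mono)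
      fix m assume "m \<in> Ms"
      have "cmod (\<phi> m * complex_of_real (R (xm m - 1/\<alpha>) - R (xm m))) \<le> 1 * \<bar>R (xm m - 1/\<alpha>) - R (xm m)\<bar>"
        unfolding norm_mult norm_of_real using \<phi> by (intro mult_right_mono) auto
      also have "\<dots> \<le> \<bar>R (xm m - 1/\<alpha>)\<bar> + \<bar>R (xm m)\<bar>" by simp
      also have "\<dots> \<le> fej N (xm m + (- 1/\<alpha>)) / (2 * L) + fej N (xm m + 0) / (2 * L)"
        using RR[of "xm m - 1/\<alpha>"] RR[of "xm m"] by simp
      finally show "cmod (\<phi> m * complex_of_real (R (xm m - 1/\<alpha>) - R (xm m))) \<le> fej N (xm m + (- 1/\<alpha>)) / (2 * L) + fej N (xm m + 0) / (2 * L)" .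
    qed
    also have "\<dots> = ((\<Sum>m\<in>Ms. fej N ((\<beta> - real m) / \<alpha> + (- 1/\<alpha>))) + (\<Sum>m\<in>Ms. fej N ((\<beta> - real m) / \<alpha> + 0))) / (2 * L)"
      unfolding xm_def by (simp add: sum.distrib sum_divide_distrib add_divide_distrib)
    also have "\<dots> \<le> ((\<Sum>h\<in>{- int N..int N}. S h) + (\<Sum>h\<in>{- int N..int N}. S h)) / (2 * L)"
      unfolding S_def using L_def
      by (intro divide_right_mono add_mono FS finM) (use a0 in auto)
    also have "\<dots> = (1 / L) * (\<Sum>h\<in>{- int N..int N}. S h)" using HL H0 by (simp add: field_simps)
    also have "\<dots> \<le> (1 / H) * (\<Sum>h\<in>{- int N..int N}. S h)"
    proof (rule mult_right_mono)
      show "1 / L \<le> 1 / H" using HL H0 by (intro divide_left_mono) auto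
      show "0 \<le> (\<Sum>h\<in>{- int N..int N}. S h)" unfolding S_def by (intro sum_nonneg) auto
    qed
    finally show ?thesis .
  qed
  have "cmod (X - (1 / complex_of_real \<alpha>) * Y) \<le> cmod (X - Z) + cmod (Z - (1 / complex_of_real \<alpha>) * Y)"
    using norm_triangle_ineq[of "X - Z" "Z - (1 / complex_of_real \<alpha>) * Y"] by simp
  also have "cmod (Z - (1 / complex_of_real \<alpha>) * Y) \<le>
      (\<Sum>h\<in>{- int N..int N} - {0}. min (1 / \<alpha>) (1 / real_of_int \<bar>h\<bar>) * T h) + (1 / H) * (\<Sum>h\<in>{- int N..int N}. S h)"
    unfolding ZY using V Rb by (smt (verit) norm_triangle_ineq)
  finally have "cmod (X - (1 / complex_of_real \<alpha>) * Y) \<le>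
      (\<Sum>h\<in>{- int N..int N} - {0}. min (1 / \<alpha>) (1 / real_of_int \<bar>h\<bar>) * T h) + (1 / H) * (\<Sum>h\<in>{- int N..int N}. S h) + 1"
    using cA by simp
  then show ?thesis unfolding H1 H0s X_def Y_def T_def S_def Ns_def Ms_def .
qed

theorem proposition5:
  shows "\<exists>C::real. \<forall>(\<phi>::nat \<Rightarrow> complex) (\<alpha>::real) (\<beta>::real) (K::real) (H::real).
    (\<forall>m. cmod (\<phi> m) \<le> 1) \<and> \<alpha> \<ge> 1 \<and> \<beta> \<ge> 0 \<and> K \<ge> 0 \<and> H \<ge> 1 \<longrightarrow>
    cmod ((\<Sum>n\<in>{n::nat. 0 < n \<and> real n \<le> K}. \<phi> (nat \<lfloor>real n * \<alpha> + \<beta>\<rfloor>))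
          - (1 / complex_of_real \<alpha>) * (\<Sum>m\<in>{m::nat. \<beta> < real m \<and> real m \<le> \<beta> + K * \<alpha>}. \<phi> m))
    \<le> (\<Sum>h\<in>{h::int. 1 \<le> \<bar>h\<bar> \<and> real_of_int \<bar>h\<bar> \<le> H}.
          min (1 / \<alpha>) (1 / real_of_int \<bar>h\<bar>) *
          cmod (\<Sum>m\<in>{m::nat. \<beta> < real m \<and> real m \<le> \<beta> + K * \<alpha>}.
                  \<phi> m * e (- real m * (real_of_int h / \<alpha>))))
      + (1 / H) * (\<Sum>h\<in>{h::int. 0 \<le> \<bar>h\<bar> \<and> real_of_int \<bar>h\<bar> \<le> H}.
          cmod (\<Sum>m\<in>{m::nat. \<beta> < real m \<and> real m \<le> \<beta> + K * \<alpha>}.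
                  e (- real m * (real_of_int h / \<alpha>))))
      + C"
  by (intro exI[of _ 1] allI impI) (elim conjE, rule main_ineq)

end
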